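(* Let $(\mathcal{X},\mathfrak{X})$ be a separable measurable space, $\mathcal{Y}$ a separable real Hilbert space, $X,Y$ random variables in $\mathcal{X},\mathcal{Y}$ with $\mathbb{E}\lVert Y\rVert_\mathcal{Y}^2<\infty$, and $f^*$ measurable with $\mathbb{E}[Y\mid X]=f^*(X)$. Let $\mathcal{H}$ be a separable vector-valued RKHS of functions $\mathcal{X}\to\mathcal{Y}$ with kernel $K$ satisfying $\sup_x\lVert K(x,x)\rVert_{\mathrm{op}}<B$ for some $B>0$, and let $\iota:\mathcal{H}\to L^2(\mathcal{X},P_X;\mathcal{Y})$ be the inclusion. Suppose $\iota\mathcal{H}$ is dense in $L^2(\mathcal{X},P_X;\mathcal{Y})$. Let $(X_i,Y_i)_{i\ge1}$ be i.i.d. copies of $(X,Y)$, and let $\lambda_n>0$ converge to $0$ at a slower rate than $n^{-1/2}$ (i.e. $\sqrt{n}\,\lambda_n\to\infty$). Let $\hat f_{n,\lambda_n}$ be the minimiser over $\mathcal{H}$ of $\frac1n\sum_{i=1}^n\lVert f(X_i)-Y_i\rVert_\mathcal{Y}^2+\lambda_n\lVert f\rVert_\mathcal{H}^2$. Then $$R(\hat f_{n,\lambda_n})-R(f^* )=\mathbb{E}\big[\lVert\hat f_{n,\lambda_n}(X)-f^*(X)\rVert_\mathcal{Y}^2\big]=\lVert\iota\hat f_{n,\lambda_n}-f^*\rVert_2^2\xrightarrow{P}0,$$ where $R(f)=\mathbb{E}\lVert f(X)-Y\rVert_\mathcal{Y}^2$ (with the expectation taken over an independent copy $(X,Y)$,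 conditionally on the sample).
   Context: A vector-valued RKHS is a Hilbert space of functions $\mathcal{X}\to\mathcal{Y}$ with continuous evaluation maps $S_xf=f(x)$; its kernel is $K(x,x')y=S_xS_{x'}^*y$. $L^2(\mathcal{X},P_X;\mathcal{Y})$ is the Bochner space with norm $\lVert f\rVert_2=(\mathbb{E}\lVert f(X)\rVert_\mathcal{Y}^2)^{1/2}$, $P_X$ the law of $X$. $\xrightarrow{P}$ denotes convergence in probability. *)

theory Defs
  imports "HOL-Probability.Probability"
begin

definition separable_measurable_space :: "'x measure \<Rightarrow> bool" where
  "separable_measurable_space MX \<longleftrightarrow>
     (\<exists>C. countable C \<and> C \<subseteq> Pow (space MX) \<and> sets MX = sigma_sets (space MX) C)"

text \<open>A vector-valued RKHS: a Hilbert space (type 'h) injectively and linearly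
  identified with functions 'x to 'y via emb, with bounded (continuous) evaluation maps
  S_x h = emb h x.\<close>
definition vv_rkhs :: "('h::{real_inner,complete_space} \<Rightarrow> 'x \<Rightarrow> 'y::real_inner) \<Rightarrow> bool" where
  "vv_rkhs emb \<longleftrightarrow> inj emb \<and> (\<forall>x. bounded_linear (\<lambda>h. emb h x))"

definition eval_adj :: "('h::real_inner \<Rightarrow> 'x \<Rightarrow> 'y::real_inner) \<Rightarrow> 'x \<Rightarrow> 'y \<Rightarrow> 'h" where
  "eval_adj emb x y = (THE h. \<forall>g. inner h g = inner y (emb g x))"

definition rk_kernel :: "('h::real_inner \<Rightarrow> 'x \<Rightarrow> 'y::real_inner) \<Rightarrow> 'x \<Rightarrow> 'x \<Rightarrow> 'y \<Rightarrow> 'y" where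
  "rk_kernel emb x x' y = emb (eval_adj emb x' y) x"

text \<open>Vector-valued conditional expectation E[Y | X] = g(X), via its defining property
  (g(X) is automatically sigma(X)-measurable once g is measurable).\<close>
definition is_cond_exp_given :: "'a measure \<Rightarrow> 'x measure \<Rightarrow> ('a \<Rightarrow> 'x) \<Rightarrow> ('a \<Rightarrow> 'y::{real_normed_vector,second_countable_topology}) \<Rightarrow> ('x \<Rightarrow> 'y) \<Rightarrow> bool" where
  "is_cond_exp_given M MX X Y g \<longleftrightarrow>
     g \<in> borel_measurable MX \<and> integrable M (\<lambda>\<omega>. g (X \<omega>)) \<and>
     (\<forall>A\<in>sets MX. (\<integral>\<omega>. indicator A (X \<omega>) *\<^sub>R Y \<omega> \<partial>M) = (\<integral>\<omega>. indicator A (X \<omega>) *\<^sub>R g (X \<omega>) \<partial>M))"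

definition L2_sq_norm :: "'x measure \<Rightarrow> ('x \<Rightarrow> 'y::real_normed_vector) \<Rightarrow> real" where
  "L2_sq_norm PX f = (\<integral>x. (norm (f x))\<^sup>2 \<partial>PX)"

definition in_L2 :: "'x measure \<Rightarrow> ('x \<Rightarrow> 'y::{real_normed_vector,second_countable_topology}) \<Rightarrow> bool" where
  "in_L2 PX f \<longleftrightarrow> f \<in> borel_measurable PX \<and> integrable PX (\<lambda>x. (norm (f x))\<^sup>2)"

definition risk :: "'a measure \<Rightarrow> ('a \<Rightarrow> 'x) \<Rightarrow> ('a \<Rightarrow> 'y::real_normed_vector) \<Rightarrow> ('x \<Rightarrow> 'y) \<Rightarrow> real" where
  "risk M X Y f = (\<integral>\<omega>. (norm (f (X \<omega>) - Y \<omega>))\<^sup>2 \<partial>M)"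

definition reg_emp_risk :: "('h::real_normed_vector \<Rightarrow> 'x \<Rightarrow> 'y::real_normed_vector) \<Rightarrow> (nat \<Rightarrow> 'x) \<Rightarrow> (nat \<Rightarrow> 'y) \<Rightarrow> nat \<Rightarrow> real \<Rightarrow> 'h \<Rightarrow> real" where
  "reg_emp_risk emb xs ys n lam f =
     (1 / real n) * (\<Sum>i<n. (norm (emb f (xs i) - ys i))\<^sup>2) + lam * (norm f)\<^sup>2"

end

theory Submission
  imports Defs "HOL-Probability.Probability"
begin

lemma quad_zero:
  fixes A C :: real
  assumes "\<And>t. 0 \<le> t * A + t^2 * C"
  shows "A = 0"
proof (rule ccontr)
  assume "A \<noteq> 0"
  define t where "t = - A / (\<bar>C\<bar> + 1)"
  have pos: "\<bar>C\<bar> + 1 > 0" by simp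
  have "t * A = - (A^2) / (\<bar>C\<bar> + 1)" unfolding t_def by (simp add: power2_eq_square)
  moreover have "t^2 * C \<le> t^2 * \<bar>C\<bar>" by (simp add: mult_left_mono)
  moreover have "t^2 * \<bar>C\<bar> = A^2 * \<bar>C\<bar> / (\<bar>C\<bar> + 1)^2" unfolding t_def by (simp add: power_divide)
  moreover have "A^2 * \<bar>C\<bar> / (\<bar>C\<bar> + 1)^2 < A^2 / (\<bar>C\<bar> + 1)"
  proof -
    have "A^2 > 0" using \<open>A \<noteq> 0\<close> by simp
    have "A^2 * \<bar>C\<bar> < A^2 * (\<bar>C\<bar> + 1)" using \<open>A^2 > 0\<close> by simp
    then have "A^2 * \<bar>C\<bar> / (\<bar>C\<bar> + 1)^2 < A^2 * (\<bar>C\<bar> + 1) / (\<bar>C\<bar> + 1)^2"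
      using pos by (simp add: divide_strict_right_mono)
    also have "\<dots> = A^2 / (\<bar>C\<bar> + 1)" using pos by (simp add: power2_eq_square)
    finally show ?thesis .
  qed
  ultimately have "t * A + t^2 * C < 0" by linarith
  with assms[of t] show False by linarith
qed

lemma cauchy_arith:
  assumes c: "(c::real) > 0" and e: "e > 0" and N: "4 / (c * e^2) < real N" and Npos: "real N > 0"
  and h: "c * x / 2 < 2 / N" shows "x < e^2"
proof -
  have "c * x < 4 / N" using h by linarith
  then have "x < (4/N)/c" using c by (metis pos_less_divide_eq mult.commute)
  moreover have "4 < N * (c * e^2)" using N c e by (simp add: divide_less_eq mult.commute)
  then have "(4/N)/c < e^2" using c Npos by (simp add: divide_less_eq mult.commute mult.left_commute)
  ultimately show ?thesis by linarith
qed

lemma lax_milgram: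
  fixes a :: "'h::{real_inner,complete_space} \<Rightarrow> 'h \<Rightarrow> real" and \<phi> :: "'h \<Rightarrow> real"
  assumes bil: "bounded_bilinear a" and sym: "\<And>u v. a u v = a v u"
    and c: "c > 0" and coer: "\<And>u. a u u \<ge> c * (norm u)^2"
    and phi: "bounded_linear \<phi>"
  shows "\<exists>u. \<forall>v. a u v = \<phi> v"
proof -
  interpret a: bounded_bilinear a by fact
  interpret p: bounded_linear \<phi> by fact
  obtain K where K: "K > 0" "\<And>u. norm (\<phi> u) \<le> norm u * K" using p.pos_bounded by blast
  define E where "E u = a u u - 2 * \<phi> u" for u
  have Elow: "E u \<ge> - (K^2) / c" for u
  proof -
    have "\<phi> u \<le> norm u * K" using K(2)[of u] by simp
    hence "E u \<ge> c * (norm u)^2 - 2 * (norm u * K)" using coer[of u] unfolding E_def by linarith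
    moreover have "c * (norm u)^2 - 2 * (norm u * K) \<ge> - (K^2) / c"
    proof -
      have "0 \<le> (c * norm u - K)^2" by simp
      hence "0 \<le> c^2 * (norm u)^2 - 2 * c * (norm u * K) + K^2" by (simp add: power2_eq_square algebra_simps)
      hence "0 \<le> (c * (norm u)^2 - 2 * (norm u * K) + K^2 / c) * c" using c
        by (simp add: algebra_simps power2_eq_square)
      hence "0 \<le> c * (norm u)^2 - 2 * (norm u * K) + K^2 / c" using c
        by (simp add: zero_le_mult_iff)
      thus ?thesis by linarith
    qed
    ultimately show ?thesis by linarith
  qed
  define m where "m = Inf (range E)"
  have bdd: "bdd_below (range E)" using Elow by (intro bdd_belowI[where m="-(K^2)/c"]) auto
  have mle: "m \<le> E u" for u unfolding m_def using bdd by (simp add: cINF_lower)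
  have "\<exists>u. E u < m + 1 / (Suc k)" for k
  proof -
    have "Inf (range E) < m + 1 / Suc k" unfolding m_def by simp
    then show ?thesis using cInf_lessD[of "range E"] by blast
  qed
  then obtain us where us: "\<And>k. E (us k) < m + 1 / Suc k" by metis
  have para: "E u + E v - 2 * E ((1/2) *\<^sub>R (u + v)) = a (u - v) (u - v) / 2" for u v
  proof -
    have 1: "a (u+v) (u+v) = a u u + 2 * a u v + a v v" by (simp add: a.add_left a.add_right sym[of v u])
    have 2: "a (u-v) (u-v) = a u u - 2 * a u v + a v v" by (simp add: a.diff_left a.diff_right sym[of v u])
    have 3: "a ((1/2) *\<^sub>R (u+v)) ((1/2) *\<^sub>R (u+v)) = (1/4) * a (u+v) (u+v)"
      by (simp add: a.scaleR_left a.scaleR_right)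
    have 4: "\<phi> ((1/2) *\<^sub>R (u+v)) = (\<phi> u + \<phi> v) / 2" by (simp add: p.scaleR p.add)
    show ?thesis unfolding E_def using 1 2 3 4 by simp
  qed
  have close: "c * (norm (u - v))^2 / 2 \<le> E u + E v - 2 * m" for u v
  proof -
    have "c * (norm (u - v))^2 / 2 \<le> a (u - v) (u - v) / 2" using coer[of "u - v"] by simp
    also have "\<dots> = E u + E v - 2 * E ((1/2) *\<^sub>R (u + v))" using para by simp
    also have "\<dots> \<le> E u + E v - 2 * m" using mle[of "(1/2) *\<^sub>R (u + v)"] by simp
    finally show ?thesis .
  qed
  have "Cauchy us"
  proof (rule metric_CauchyI)
    fix e :: real assume e: "e > 0"
    obtain N :: nat where N: "4 / (c * e^2) < N" using reals_Archimedean2 by blast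
    show "\<exists>M. \<forall>k\<ge>M. \<forall>l\<ge>M. dist (us k) (us l) < e"
    proof (intro exI allI impI)
      fix k l assume kl: "N \<le> k" "N \<le> l"
      have Npos: "real N > 0" using N c e by (smt (verit, best) divide_pos_pos mult_pos_pos zero_less_power)
      have "c * (norm (us k - us l))^2 / 2 \<le> E (us k) + E (us l) - 2 * m" by (rule close)
      also have "\<dots> < 1 / Suc k + 1 / Suc l" using us[of k] us[of l] by linarith
      also have "\<dots> \<le> 2 / N"
      proof -
        have "1 / real (Suc k) \<le> 1 / N" using kl Npos by (intro divide_left_mono) auto
        moreover have "1 / real (Suc l) \<le> 1 / N" using kl Npos by (intro divide_left_mono) auto
        ultimately show ?thesis by simp
      qed
      finally have "(norm (us k - us l))^2 < e^2" using cauchy_arith[OF c e N Npos] by blast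
      then show "dist (us k) (us l) < e" using e by (simp add: dist_norm power_less_imp_less_base)
    qed
  qed
  then obtain u where u: "us \<longlonglongrightarrow> u" using Cauchy_convergent_iff convergent_def by blast
  have Econt: "(\<lambda>k. E (us k)) \<longlonglongrightarrow> E u" unfolding E_def
    by (intro tendsto_intros a.tendsto p.tendsto u)
  have Em: "(\<lambda>k. E (us k)) \<longlonglongrightarrow> m"
  proof (rule tendsto_sandwich[of "\<lambda>_. m" _ _ "\<lambda>k. m + 1 / Suc k"])
    show "\<forall>\<^sub>F n in sequentially. m \<le> E (us n)" using mle by simp
    show "\<forall>\<^sub>F n in sequentially. E (us n) \<le> m + 1 / real (Suc n)" using us by (simp add: less_imp_le)
    show "(\<lambda>n. m) \<longlonglongrightarrow> m" by simp
    show "(\<lambda>n. m + 1 / real (Suc n)) \<longlonglongrightarrow> m"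
      using tendsto_add[OF tendsto_const[of m] LIMSEQ_Suc[OF lim_const_over_n[of 1]]] by simp
  qed
  have Eu: "E u = m" using LIMSEQ_unique[OF Econt Em] .
  show ?thesis
  proof (intro exI allI)
    fix v
    have "0 \<le> t * (2 * (a u v - \<phi> v)) + t^2 * a v v" for t
    proof -
      have 1: "a (u + t *\<^sub>R v) (u + t *\<^sub>R v) = a u u + 2 * t * a u v + t^2 * a v v"
        by (simp add: a.add_left a.add_right a.scaleR_left a.scaleR_right sym[of v u] power2_eq_square algebra_simps)
      have 2: "\<phi> (u + t *\<^sub>R v) = \<phi> u + t * \<phi> v" by (simp add: p.add p.scaleR)
      have "E (u + t *\<^sub>R v) = E u + t * (2 * (a u v - \<phi> v)) + t^2 * a v v"
        unfolding E_def using 1 2 by (simp add: algebra_simps)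
      moreover have "E u \<le> E (u + t *\<^sub>R v)" using Eu mle by simp
      ultimately show ?thesis by linarith
    qed
    from quad_zero[OF this] show "a u v = \<phi> v" by simp
  qed
qed

lemma riesz:
  fixes \<phi> :: "'h::{real_inner,complete_space} \<Rightarrow> real"
  assumes "bounded_linear \<phi>"
  shows "\<exists>u. \<forall>v. inner u v = \<phi> v"
  using lax_milgram[OF bounded_bilinear_inner, of 1 \<phi>] assms
  by (simp add: inner_commute power2_norm_eq_inner)

lemma inner_ext_eq:
  fixes a b :: "'h::real_inner"
  assumes "\<And>g. inner a g = inner b g" shows "a = b"
proof -
  have "inner (a - b) (a - b) = 0" using assms[of "a-b"] by (simp add: inner_diff_left)
  thus ?thesis by simp
qed

lemma eval_adj_inner:
  fixes emb :: "'h::{real_inner,complete_space} \<Rightarrow> 'x \<Rightarrow> 'y::real_inner"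
  assumes bl: "bounded_linear (\<lambda>h. emb h x)"
  shows "inner (eval_adj emb x y) g = inner y (emb g x)"
proof -
  have "bounded_linear (\<lambda>g. inner y (emb g x))"
    using bounded_linear_compose[OF bounded_linear_inner_right bl] by simp
  from riesz[OF this] obtain u where u: "\<And>g. inner u g = inner y (emb g x)" by blast
  have "eval_adj emb x y = u" unfolding eval_adj_def
  proof (rule the_equality)
    show "\<forall>g. inner u g = inner y (emb g x)" using u by blast
    fix h assume "\<forall>g. inner h g = inner y (emb g x)"
    then show "h = u" using u by (metis inner_ext_eq)
  qed
  then show ?thesis using u by simp
qed

lemma eval_adj_bl:
  fixes emb :: "'h::{real_inner,complete_space} \<Rightarrow> 'x \<Rightarrow> 'y::real_inner"
  assumes bl: "bounded_linear (\<lambda>h. emb h x)"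
  shows "bounded_linear (eval_adj emb x)"
proof -
  interpret e: bounded_linear "\<lambda>h. emb h x" by fact
  obtain K where K: "\<And>h. norm (emb h x) \<le> norm h * K" "K > 0" using e.pos_bounded by blast
  note I = eval_adj_inner[of emb x, OF bl]
  show ?thesis
  proof (rule bounded_linear_intro)
    fix a b show "eval_adj emb x (a + b) = eval_adj emb x a + eval_adj emb x b"
      by (rule inner_ext_eq) (simp add: I inner_add_left)
  next
    fix r a show "eval_adj emb x (r *\<^sub>R a) = r *\<^sub>R eval_adj emb x a"
      by (rule inner_ext_eq) (simp add: I)
  next
    fix y
    let ?s = "eval_adj emb x y"
    have "(norm ?s)^2 = inner y (emb ?s x)" using I[of y ?s] by (simp add: power2_norm_eq_inner)
    also have "\<dots> \<le> norm y * norm (emb ?s x)" by (rule norm_cauchy_schwarz)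
    also have "\<dots> \<le> norm y * (norm ?s * K)" using K(1)[of ?s] by (simp add: mult_left_mono)
    finally have "norm ?s * norm ?s \<le> norm ?s * (norm y * K)" by (simp add: power2_eq_square algebra_simps)
    then show "norm ?s \<le> norm y * K"
      using K(2) by (cases "norm ?s = 0") (auto simp: mult_le_cancel_left)
  qed
qed

lemma rk_bound:
  fixes emb :: "'h::{real_inner,complete_space} \<Rightarrow> 'x \<Rightarrow> 'y::real_inner"
  assumes bl: "bounded_linear (\<lambda>h. emb h x)"
    and onB: "onorm (rk_kernel emb x x) \<le> B"
  shows "norm (emb h x) \<le> sqrt B * norm h"
proof -
  note I = eval_adj_inner[of emb x, OF bl]
  have blK: "bounded_linear (rk_kernel emb x x)"
  proof -
    have "rk_kernel emb x x = (\<lambda>h. emb h x) \<circ> eval_adj emb x" unfolding rk_kernel_def by (simp add: fun_eq_iff)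
    then show ?thesis using bounded_linear_compose[OF bl eval_adj_bl[of emb x, OF bl]] by (simp add: o_def)
  qed
  have Bnn: "B \<ge> 0" using onB onorm_pos_le[OF blK] by linarith
  have adj: "(norm (eval_adj emb x y))^2 \<le> B * (norm y)^2" for y
  proof -
    let ?s = "eval_adj emb x y"
    have "(norm ?s)^2 = inner y (rk_kernel emb x x y)" using I[of y ?s]
      by (simp add: power2_norm_eq_inner rk_kernel_def)
    also have "\<dots> \<le> norm y * norm (rk_kernel emb x x y)" by (rule norm_cauchy_schwarz)
    also have "\<dots> \<le> norm y * (onorm (rk_kernel emb x x) * norm y)"
      using onorm[OF blK] by (simp add: mult_left_mono)
    also have "\<dots> \<le> norm y * (B * norm y)" using onB by (simp add: mult_left_mono mult_right_mono)
    finally show ?thesis by (simp add: power2_eq_square algebra_simps)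
  qed
  let ?y = "emb h x"
  have "(norm ?y)^2 = inner (eval_adj emb x ?y) h" using I[of ?y h] by (simp add: power2_norm_eq_inner)
  also have "\<dots> \<le> norm (eval_adj emb x ?y) * norm h" by (rule norm_cauchy_schwarz)
  also have "\<dots> \<le> sqrt B * norm ?y * norm h"
  proof -
    have "norm (eval_adj emb x ?y) \<le> sqrt (B * (norm ?y)^2)" using adj[of ?y] by (simp add: real_le_rsqrt)
    also have "\<dots> = sqrt B * norm ?y" by (simp add: real_sqrt_mult)
    finally show ?thesis by (simp add: mult_right_mono)
  qed
  finally have "norm ?y * norm ?y \<le> norm ?y * (sqrt B * norm h)" by (simp add: power2_eq_square algebra_simps)
  then show ?thesis using Bnn by (cases "norm ?y = 0") (auto simp: mult_le_cancel_left)
qed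

lemma integrableI_sequence_rn:
  fixes f :: "'a \<Rightarrow> 'b::{real_normed_vector, complete_space, second_countable_topology}"
    and sq :: "nat \<Rightarrow> 'a \<Rightarrow> 'b"
  assumes f[measurable]: "f \<in> borel_measurable M"
  assumes s: "\<And>i. Bochner_Integration.simple_bochner_integrable M (sq i)"
  assumes lim: "(\<lambda>i. \<integral>\<^sup>+x. norm (f x - sq i x) \<partial>M) \<longlonglongrightarrow> 0"
  shows "integrable M f"
proof -
  define SS where "SS i = (\<integral>\<^sup>+x. norm (f x - sq i x) \<partial>M)" for i
  define sI where "sI = (\<lambda>n. Bochner_Integration.simple_bochner_integral M (sq n))"
  have lim': "SS \<longlonglongrightarrow> 0" using lim unfolding SS_def .
  have "Cauchy sI"
  proof (rule metric_CauchyI)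
    fix e :: real assume "0 < e"
    then have "0 < ennreal (e / 2)" by auto
    from order_tendstoD(2)[OF lim' this]
    obtain N where N: "\<And>n. N \<le> n \<Longrightarrow> SS n < e / 2"
      by (auto simp: eventually_sequentially)
    show "\<exists>M. \<forall>m\<ge>M. \<forall>n\<ge>M. dist (sI m) (sI n) < e"
    proof (intro exI allI impI)
      fix m n assume m: "N \<le> m" and n: "N \<le> n"
      have "norm (sI n - sI m) \<le> SS n + SS m"
        unfolding sI_def SS_def by (intro simple_bochner_integral_bounded s f)
      also have "\<dots> < ennreal (e / 2) + e / 2"
        by (intro add_strict_mono N n m)
      also have "\<dots> = e" using \<open>0<e\<close> by (simp flip: ennreal_plus)
      finally show "dist (sI n) (sI m) < e"
        using \<open>0<e\<close> by (simp add: dist_norm ennreal_less_iff)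
    qed
  qed
  then obtain x where x: "sI \<longlonglongrightarrow> x" using Cauchy_convergent_iff convergent_def by blast
  have "has_bochner_integral M f x"
    using has_bochner_integral.intros[OF f s lim] x unfolding sI_def by blast
  then show ?thesis by (rule integrable.intros)
qed

lemma integrableI_bounded_rn:
  fixes f :: "'a \<Rightarrow> 'b::{real_normed_vector, complete_space, second_countable_topology}"
  assumes f[measurable]: "f \<in> borel_measurable M" and fin: "(\<integral>\<^sup>+x. norm (f x) \<partial>M) < \<infinity>"
  shows "integrable M f"
proof -
  from borel_measurable_implies_sequence_metric[OF f, of 0] obtain s where
    s: "\<And>i. simple_function M (s i)" and
    pointwise: "\<And>x. x \<in> space M \<Longrightarrow> (\<lambda>i. s i x) \<longlonglongrightarrow> f x" and
    bound: "\<And>i x. x \<in> space M \<Longrightarrow> norm (s i x) \<le> 2 * norm (f x)"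
    by simp metis
  show ?thesis
  proof (rule integrableI_sequence_rn)
    { fix i
      have "(\<integral>\<^sup>+x. norm (s i x) \<partial>M) \<le> (\<integral>\<^sup>+x. ennreal (2 * norm (f x)) \<partial>M)"
        by (intro nn_integral_mono) (simp add: bound)
      also have "\<dots> = 2 * (\<integral>\<^sup>+x. ennreal (norm (f x)) \<partial>M)"
        by (simp add: ennreal_mult nn_integral_cmult)
      also have "\<dots> < top"
        using fin by (simp add: ennreal_mult_less_top)
      finally have "(\<integral>\<^sup>+x. norm (s i x) \<partial>M) < \<infinity>"
        by simp }
    note fin_s = this
    show "\<And>i. Bochner_Integration.simple_bochner_integrable M (s i)"
      by (rule Bochner_Integration.simple_bochner_integrableI_bounded) fact+
    show "(\<lambda>i. \<integral>\<^sup>+ x. ennreal (norm (f x - s i x)) \<partial>M) \<longlonglongrightarrow> 0"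
    proof (rule nn_integral_dominated_convergence_norm)
      show "\<And>j. AE x in M. norm (s j x) \<le> 2 * norm (f x)"
        using bound by auto
      show "\<And>i. s i \<in> borel_measurable M" "(\<lambda>x. 2 * norm (f x)) \<in> borel_measurable M"
        using s by (auto intro: borel_measurable_simple_function)
      show "(\<integral>\<^sup>+ x. ennreal (2 * norm (f x)) \<partial>M) < \<infinity>"
        using fin by (simp add: nn_integral_cmult ennreal_mult ennreal_mult_less_top)
      show "AE x in M. (\<lambda>i. s i x) \<longlonglongrightarrow> f x"
        using pointwise by auto
    qed fact
  qed fact
qed

lemma integrable_bound_rn:
  fixes f :: "'a \<Rightarrow> 'b::{banach, second_countable_topology}"
    and g :: "'a \<Rightarrow> 'c::{real_normed_vector, complete_space, second_countable_topology}"
  assumes "integrable M f" "g \<in> borel_measurable M" "AE x in M. norm (g x) \<le> norm (f x)"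
  shows "integrable M g"
proof (rule integrableI_bounded_rn[OF assms(2)])
  have "(\<integral>\<^sup>+x. norm (g x) \<partial>M) \<le> (\<integral>\<^sup>+x. norm (f x) \<partial>M)"
    using assms(3) by (intro nn_integral_mono_AE) auto
  also have "\<dots> < \<infinity>" using assms(1) unfolding integrable_iff_bounded by auto
  finally show "(\<integral>\<^sup>+x. norm (g x) \<partial>M) < \<infinity>" .
qed

definition L2M :: "'a measure \<Rightarrow> ('a \<Rightarrow> 'z::real_normed_vector) \<Rightarrow> bool" where
  "L2M M f \<longleftrightarrow> f \<in> borel_measurable M \<and> integrable M (\<lambda>\<omega>. (norm (f \<omega>))^2)"

lemma prod_le_sq: "(a::real) * b \<le> a^2 + b^2" if "a \<ge> 0" "b \<ge> 0"
proof -
  have "0 \<le> a * b" using that by simp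
  with sum_squares_bound[of a b] show ?thesis by linarith
qed

lemma abs_inner_le_sq: "\<bar>inner a b\<bar> \<le> (norm a)^2 + (norm (b::'z::real_inner))^2"
proof -
  have "\<bar>inner a b\<bar> \<le> norm a * norm b" by (rule Cauchy_Schwarz_ineq2)
  also have "\<dots> \<le> (norm a)^2 + (norm b)^2" by (rule prod_le_sq) auto
  finally show ?thesis .
qed

lemma norm_add_sq: "(norm (a + b))^2 = (norm a)^2 + 2 * inner a b + (norm (b::'z::real_inner))^2"
  by (simp add: power2_norm_eq_inner inner_add_left inner_add_right inner_commute[of b a])

lemma norm_diff_sq: "(norm (a - b))^2 = (norm a)^2 - 2 * inner a b + (norm (b::'z::real_inner))^2"
  by (simp add: power2_norm_eq_inner inner_diff_left inner_diff_right inner_commute[of b a])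

lemma norm_add_sq_le: "(norm (a + b))^2 \<le> 2 * (norm a)^2 + 2 * (norm (b::'z::real_inner))^2"
proof -
  have "2 * inner a b \<le> 2 * norm a * norm b" using norm_cauchy_schwarz[of a b] by simp
  then have "2 * inner a b \<le> (norm a)^2 + (norm b)^2"
    using sum_squares_bound[of "norm a" "norm b"] by linarith
  then show ?thesis using norm_add_sq[of a b] by linarith
qed

lemma norm_diff_sq_le: "(norm (a - b))^2 \<le> 2 * (norm a)^2 + 2 * (norm (b::'z::real_inner))^2"
  using norm_add_sq_le[of a "-b"] by simp

context
  fixes M :: "'a measure"
begin

lemma L2M_inner_int:
  fixes f g :: "'a \<Rightarrow> 'z::{real_inner,second_countable_topology}"
  assumes "L2M M f" "L2M M g"
  shows "integrable M (\<lambda>\<omega>. inner (f \<omega>) (g \<omega>))"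
proof (rule Bochner_Integration.integrable_bound[where f="\<lambda>\<omega>. (norm (f \<omega>))^2 + (norm (g \<omega>))^2"])
  show "integrable M (\<lambda>\<omega>. (norm (f \<omega>))^2 + (norm (g \<omega>))^2)" using assms unfolding L2M_def by auto
  have [measurable]: "f \<in> borel_measurable M" "g \<in> borel_measurable M" using assms unfolding L2M_def by auto
  show "(\<lambda>\<omega>. inner (f \<omega>) (g \<omega>)) \<in> borel_measurable M" by measurable
  show "AE \<omega> in M. norm (inner (f \<omega>) (g \<omega>)) \<le> norm ((norm (f \<omega>))^2 + (norm (g \<omega>))^2)"
    using abs_inner_le_sq by auto
qed

lemma L2M_normprod_int:
  fixes f :: "'a \<Rightarrow> 'z::{real_normed_vector,second_countable_topology}"
    and g :: "'a \<Rightarrow> 'w::{real_normed_vector,second_countable_topology}"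
  assumes "L2M M f" "L2M M g"
  shows "integrable M (\<lambda>\<omega>. norm (f \<omega>) * norm (g \<omega>))"
proof (rule Bochner_Integration.integrable_bound[where f="\<lambda>\<omega>. (norm (f \<omega>))^2 + (norm (g \<omega>))^2"])
  show "integrable M (\<lambda>\<omega>. (norm (f \<omega>))^2 + (norm (g \<omega>))^2)" using assms unfolding L2M_def by auto
  have [measurable]: "f \<in> borel_measurable M" "g \<in> borel_measurable M" using assms unfolding L2M_def by auto
  show "(\<lambda>\<omega>. norm (f \<omega>) * norm (g \<omega>)) \<in> borel_measurable M" by measurable
  show "AE \<omega> in M. norm (norm (f \<omega>) * norm (g \<omega>)) \<le> norm ((norm (f \<omega>))^2 + (norm (g \<omega>))^2)"
    using prod_le_sq by auto
qed

lemma L2M_add: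
  fixes f g :: "'a \<Rightarrow> 'z::{real_inner,second_countable_topology}"
  assumes "L2M M f" "L2M M g"
  shows "L2M M (\<lambda>\<omega>. f \<omega> + g \<omega>)"
  unfolding L2M_def
proof
  have [measurable]: "f \<in> borel_measurable M" "g \<in> borel_measurable M" using assms unfolding L2M_def by auto
  show "(\<lambda>\<omega>. f \<omega> + g \<omega>) \<in> borel_measurable M" by measurable
  show "integrable M (\<lambda>\<omega>. (norm (f \<omega> + g \<omega>))^2)"
  proof (rule Bochner_Integration.integrable_bound[where f="\<lambda>\<omega>. 2 * (norm (f \<omega>))^2 + 2 * (norm (g \<omega>))^2"])
    show "integrable M (\<lambda>\<omega>. 2 * (norm (f \<omega>))^2 + 2 * (norm (g \<omega>))^2)" using assms unfolding L2M_def by auto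
    show "(\<lambda>\<omega>. (norm (f \<omega> + g \<omega>))^2) \<in> borel_measurable M" by measurable
    show "AE \<omega> in M. norm ((norm (f \<omega> + g \<omega>))^2) \<le> norm (2 * (norm (f \<omega>))^2 + 2 * (norm (g \<omega>))^2)"
      using norm_add_sq_le by auto
  qed
qed

lemma L2M_scale:
  fixes f :: "'a \<Rightarrow> 'z::{real_inner,second_countable_topology}"
  assumes "L2M M f"
  shows "L2M M (\<lambda>\<omega>. c *\<^sub>R f \<omega>)"
  using assms unfolding L2M_def by (auto simp: power_mult_distrib)

lemma L2M_uminus:
  fixes f :: "'a \<Rightarrow> 'z::{real_inner,second_countable_topology}"
  assumes "L2M M f"
  shows "L2M M (\<lambda>\<omega>. - f \<omega>)"
  using L2M_scale[OF assms, of "-1"] by simp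

lemma L2M_diff:
  fixes f g :: "'a \<Rightarrow> 'z::{real_inner,second_countable_topology}"
  assumes "L2M M f" "L2M M g"
  shows "L2M M (\<lambda>\<omega>. f \<omega> - g \<omega>)"
  using L2M_add[OF assms(1) L2M_uminus[OF assms(2)]] by simp

lemma L2M_bounded:
  fixes f :: "'a \<Rightarrow> 'z::{real_inner,second_countable_topology}"
  assumes "finite_measure M" "f \<in> borel_measurable M" "\<And>\<omega>. \<omega> \<in> space M \<Longrightarrow> norm (f \<omega>) \<le> C"
  shows "L2M M f"
  unfolding L2M_def
proof
  interpret finite_measure M by fact
  show "f \<in> borel_measurable M" by fact
  show "integrable M (\<lambda>\<omega>. (norm (f \<omega>))^2)"
  proof (rule Bochner_Integration.integrable_bound[where f="\<lambda>\<omega>. C^2"])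
    show "integrable M (\<lambda>\<omega>. C^2)" by simp
    show "(\<lambda>\<omega>. (norm (f \<omega>))^2) \<in> borel_measurable M" using assms by measurable
    show "AE \<omega> in M. norm ((norm (f \<omega>))^2) \<le> norm (C^2)"
      using assms(3) by (auto intro!: AE_I2 power_mono)
  qed
qed

lemma L2M_int:
  fixes f :: "'a \<Rightarrow> 'z::{real_normed_vector,complete_space,second_countable_topology}"
  assumes "finite_measure M" "L2M M f"
  shows "integrable M f"
proof -
  interpret finite_measure M by fact
  show ?thesis
  proof (rule integrable_bound_rn[where f="\<lambda>\<omega>. 1 + (norm (f \<omega>))^2"])
    show "integrable M (\<lambda>\<omega>. 1 + (norm (f \<omega>))^2)" using assms unfolding L2M_def by auto
    show "f \<in> borel_measurable M" using assms unfolding L2M_def by auto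
    show "AE \<omega> in M. norm (f \<omega>) \<le> norm (1 + (norm (f \<omega>))^2)"
    proof (rule AE_I2)
      fix \<omega> have "norm (f \<omega>) \<le> 1 + (norm (f \<omega>))^2"
        using sum_squares_bound[of 1 "norm (f \<omega>)"] prod_le_sq[of 1 "norm (f \<omega>)"] by simp
      then show "norm (f \<omega>) \<le> norm (1 + (norm (f \<omega>))^2)" by simp
    qed
  qed
qed

end

lemma integrable_norm_rn:
  fixes f :: "'a \<Rightarrow> 'b::{real_normed_vector,second_countable_topology}"
  assumes "integrable M f" shows "integrable M (\<lambda>x. norm (f x))"
proof (rule integrableI_bounded)
  have [measurable]: "f \<in> borel_measurable M" using borel_measurable_integrable[OF assms] .
  show "(\<lambda>x. norm (f x)) \<in> borel_measurable M" by measurable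
  from assms obtain x where "has_bochner_integral M f x" by (auto simp: integrable.simps)
  from has_bochner_integral_implies_finite_norm[OF this]
  show "(\<integral>\<^sup>+x. norm (norm (f x)) \<partial>M) < \<infinity>" by simp
qed

locale krr = prob_space M for M :: "'a measure" +
  fixes MX :: "'x measure" and X :: "'a \<Rightarrow> 'x"
    and Y :: "'a \<Rightarrow> 'y::{real_inner,complete_space,second_countable_topology}"
    and fstar :: "'x \<Rightarrow> 'y"
    and emb :: "'h::{real_inner,complete_space,second_countable_topology} \<Rightarrow> 'x \<Rightarrow> 'y"
    and \<kappa> :: real
  assumes X_meas[measurable]: "X \<in> measurable M MX"
    and Y_meas[measurable]: "Y \<in> borel_measurable M"
    and Y_L2: "integrable M (\<lambda>\<omega>. (norm (Y \<omega>))^2)"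
    and cond_exp: "is_cond_exp_given M MX X Y fstar"
    and bl: "\<And>x. bounded_linear (\<lambda>h. emb h x)"
    and H_meas[measurable]: "\<And>h. emb h \<in> borel_measurable MX"
    and kap: "\<kappa> \<ge> 0"
    and ebound: "\<And>h x. norm (emb h x) \<le> \<kappa> * norm h"
begin

lemma fstar_meas[measurable]: "fstar \<in> borel_measurable MX"
  using cond_exp unfolding is_cond_exp_given_def by auto

lemma fX_int: "integrable M (\<lambda>\<omega>. fstar (X \<omega>))"
  using cond_exp unfolding is_cond_exp_given_def by auto

lemma Y_L2M: "L2M M Y" unfolding L2M_def using Y_L2 by auto

lemma Y_int: "integrable M Y"
  by (rule L2M_int[OF finite_measure_axioms Y_L2M])

lemma R_int: "integrable M (\<lambda>\<omega>. Y \<omega> - fstar (X \<omega>))"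
  using Y_int fX_int by auto

lemma hX_L2M: "L2M M (\<lambda>\<omega>. emb h (X \<omega>))"
  by (rule L2M_bounded[where C="\<kappa> * norm h"]) (auto simp: ebound finite_measure_axioms)

lemma emb_add: "emb (u + v) x = emb u x + emb v x"
proof -
  interpret e: bounded_linear "\<lambda>h. emb h x" by (rule bl)
  show ?thesis using e.add by simp
qed
lemma emb_diff: "emb (u - v) x = emb u x - emb v x"
proof -
  interpret e: bounded_linear "\<lambda>h. emb h x" by (rule bl)
  show ?thesis using e.diff by simp
qed
lemma emb_scaleR: "emb (r *\<^sub>R u) x = r *\<^sub>R emb u x"
proof -
  interpret e: bounded_linear "\<lambda>h. emb h x" by (rule bl)
  show ?thesis using e.scaleR by simp
qed
lemma emb_zero: "emb 0 x = 0"
proof -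
  interpret e: bounded_linear "\<lambda>h. emb h x" by (rule bl)
  show ?thesis using e.zero by simp
qed

lemma GP_ind:
  assumes A[measurable]: "A \<in> sets MX"
  shows "(\<integral>\<omega>. indicator A (X \<omega>) * inner c (Y \<omega> - fstar (X \<omega>)) \<partial>M) = 0"
proof -
  have ce: "(\<integral>\<omega>. indicator A (X \<omega>) *\<^sub>R Y \<omega> \<partial>M) = (\<integral>\<omega>. indicator A (X \<omega>) *\<^sub>R fstar (X \<omega>) \<partial>M)"
    using cond_exp A unfolding is_cond_exp_given_def by auto
  have i1: "integrable M (\<lambda>\<omega>. indicator A (X \<omega>) *\<^sub>R Y \<omega>)"
    by (rule integrable_bound_rn[OF integrable_norm_rn[OF Y_int]]) (auto split: split_indicator)
  have i2: "integrable M (\<lambda>\<omega>. indicator A (X \<omega>) *\<^sub>R fstar (X \<omega>))"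
    by (rule integrable_bound_rn[OF integrable_norm_rn[OF fX_int]]) (auto split: split_indicator)
  have "(\<integral>\<omega>. indicator A (X \<omega>) *\<^sub>R (Y \<omega> - fstar (X \<omega>)) \<partial>M)
      = (\<integral>\<omega>. indicator A (X \<omega>) *\<^sub>R Y \<omega> - indicator A (X \<omega>) *\<^sub>R fstar (X \<omega>) \<partial>M)"
    by (simp add: scaleR_diff_right)
  also have "\<dots> = 0" using ce i1 i2 by simp
  finally have z: "(\<integral>\<omega>. indicator A (X \<omega>) *\<^sub>R (Y \<omega> - fstar (X \<omega>)) \<partial>M) = 0" .
  have i3: "integrable M (\<lambda>\<omega>. indicator A (X \<omega>) *\<^sub>R (Y \<omega> - fstar (X \<omega>)))"
    using i1 i2 by (simp add: scaleR_diff_right)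
  have "(\<integral>\<omega>. inner c (indicator A (X \<omega>) *\<^sub>R (Y \<omega> - fstar (X \<omega>))) \<partial>M)
      = inner c (\<integral>\<omega>. indicator A (X \<omega>) *\<^sub>R (Y \<omega> - fstar (X \<omega>)) \<partial>M)"
    using i3 by (rule integral_inner_right)
  also have "\<dots> = 0" using z by simp
  finally show ?thesis by simp
qed

lemma GP_simple:
  assumes s: "simple_function MX s"
  shows "(\<integral>\<omega>. inner (s (X \<omega>)) (Y \<omega> - fstar (X \<omega>)) \<partial>M) = 0"
proof -
  let ?S = "s ` space MX"
  let ?B = "\<lambda>y. s -` {y} \<inter> space MX"
  have fin: "finite ?S" using simple_functionD(1)[OF s] .
  have Bs: "?B y \<in> sets MX" for y using simple_functionD(2)[OF s] .
  have rep: "s x = (\<Sum>y\<in>?S. indicator (?B y) x *\<^sub>R y)" if x: "x \<in> space MX" for x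
  proof -
    have "(\<Sum>y\<in>?S. indicator (?B y) x *\<^sub>R y) = (\<Sum>y\<in>?S. if y = s x then y else 0)"
      by (intro sum.cong refl) (auto simp: indicator_def x)
    also have "\<dots> = s x" using fin x by (simp add: sum.delta')
    finally show ?thesis by simp
  qed
  have pw: "inner (s (X \<omega>)) (Y \<omega> - fstar (X \<omega>))
      = (\<Sum>y\<in>?S. indicator (?B y) (X \<omega>) * inner y (Y \<omega> - fstar (X \<omega>)))" if "\<omega> \<in> space M" for \<omega>
  proof -
    have "X \<omega> \<in> space MX" using that measurable_space[OF X_meas] by auto
    then show ?thesis by (subst rep) (auto simp: inner_sum_left)
  qed
  have "(\<integral>\<omega>. inner (s (X \<omega>)) (Y \<omega> - fstar (X \<omega>)) \<partial>M)
      = (\<integral>\<omega>. (\<Sum>y\<in>?S. indicator (?B y) (X \<omega>) * inner y (Y \<omega> - fstar (X \<omega>))) \<partial>M)"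
    by (rule Bochner_Integration.integral_cong) (auto simp: pw)
  also have "\<dots> = (\<Sum>y\<in>?S. (\<integral>\<omega>. indicator (?B y) (X \<omega>) * inner y (Y \<omega> - fstar (X \<omega>)) \<partial>M))"
  proof (rule Bochner_Integration.integral_sum)
    fix y
    have [measurable]: "?B y \<in> sets MX" by (rule Bs)
    show "integrable M (\<lambda>\<omega>. indicator (?B y) (X \<omega>) * inner y (Y \<omega> - fstar (X \<omega>)))"
    proof (rule Bochner_Integration.integrable_bound[where f="\<lambda>\<omega>. norm y * norm (Y \<omega> - fstar (X \<omega>))"])
      show "integrable M (\<lambda>\<omega>. norm y * norm (Y \<omega> - fstar (X \<omega>)))"
        using integrable_norm_rn[OF R_int] by (intro integrable_mult_right)
      show "(\<lambda>\<omega>. indicator (?B y) (X \<omega>) * inner y (Y \<omega> - fstar (X \<omega>))) \<in> borel_measurable M"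
        by measurable
      show "AE \<omega> in M. norm (indicator (?B y) (X \<omega>) * inner y (Y \<omega> - fstar (X \<omega>)))
          \<le> norm (norm y * norm (Y \<omega> - fstar (X \<omega>)))"
        by (intro AE_I2) (auto simp: indicator_def Cauchy_Schwarz_ineq2)
    qed
  qed
  also have "\<dots> = 0" using GP_ind[OF Bs] by simp
  finally show ?thesis .
qed

end

context krr begin

lemma half_le_aux: "(c::real) \<le> (a + b) / 2 \<Longrightarrow> a = c \<Longrightarrow> a \<le> b"
  by (simp add: field_simps)

lemma GP:
  assumes phi[measurable]: "\<phi> \<in> borel_measurable MX"
    and int: "integrable M (\<lambda>\<omega>. norm (\<phi> (X \<omega>)) * norm (Y \<omega> - fstar (X \<omega>)))"
  shows "(\<integral>\<omega>. inner (\<phi> (X \<omega>)) (Y \<omega> - fstar (X \<omega>)) \<partial>M) = 0"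
proof -
  from borel_measurable_implies_sequence_metric[OF phi, of 0] obtain s where
    s: "\<And>i. simple_function MX (s i)" and
    pointwise: "\<And>x. x \<in> space MX \<Longrightarrow> (\<lambda>i. s i x) \<longlonglongrightarrow> \<phi> x" and
    bound: "\<And>i x. x \<in> space MX \<Longrightarrow> norm (s i x) \<le> 2 * norm (\<phi> x)"
    by simp metis
  have smeas[measurable]: "s i \<in> borel_measurable MX" for i
    using s by (rule borel_measurable_simple_function)
  have lim: "(\<lambda>i. \<integral>\<omega>. inner (s i (X \<omega>)) (Y \<omega> - fstar (X \<omega>)) \<partial>M)
      \<longlonglongrightarrow> (\<integral>\<omega>. inner (\<phi> (X \<omega>)) (Y \<omega> - fstar (X \<omega>)) \<partial>M)"
  proof (rule integral_dominated_convergence[where w="\<lambda>\<omega>. 2 * (norm (\<phi> (X \<omega>)) * norm (Y \<omega> - fstar (X \<omega>)))"])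
    show "(\<lambda>\<omega>. inner (\<phi> (X \<omega>)) (Y \<omega> - fstar (X \<omega>))) \<in> borel_measurable M" by measurable
    show "(\<lambda>\<omega>. inner (s i (X \<omega>)) (Y \<omega> - fstar (X \<omega>))) \<in> borel_measurable M" for i by measurable
    show "integrable M (\<lambda>\<omega>. 2 * (norm (\<phi> (X \<omega>)) * norm (Y \<omega> - fstar (X \<omega>))))"
      using int by simp
    show "AE \<omega> in M. (\<lambda>i. inner (s i (X \<omega>)) (Y \<omega> - fstar (X \<omega>))) \<longlonglongrightarrow> inner (\<phi> (X \<omega>)) (Y \<omega> - fstar (X \<omega>))"
    proof (rule AE_I2)
      fix \<omega> assume "\<omega> \<in> space M"
      then have "X \<omega> \<in> space MX" using measurable_space[OF X_meas] by auto
      from pointwise[OF this] show "(\<lambda>i. inner (s i (X \<omega>)) (Y \<omega> - fstar (X \<omega>))) \<longlonglongrightarrow> inner (\<phi> (X \<omega>)) (Y \<omega> - fstar (X \<omega>))"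
        by (intro tendsto_intros)
    qed
    show "AE \<omega> in M. norm (inner (s i (X \<omega>)) (Y \<omega> - fstar (X \<omega>))) \<le> 2 * (norm (\<phi> (X \<omega>)) * norm (Y \<omega> - fstar (X \<omega>)))" for i
    proof (rule AE_I2)
      fix \<omega> assume "\<omega> \<in> space M"
      then have x: "X \<omega> \<in> space MX" using measurable_space[OF X_meas] by auto
      have "norm (inner (s i (X \<omega>)) (Y \<omega> - fstar (X \<omega>))) \<le> norm (s i (X \<omega>)) * norm (Y \<omega> - fstar (X \<omega>))"
        using Cauchy_Schwarz_ineq2 by simp
      also have "\<dots> \<le> 2 * norm (\<phi> (X \<omega>)) * norm (Y \<omega> - fstar (X \<omega>))"
        using bound[OF x, of i] by (intro mult_right_mono) auto
      finally show "norm (inner (s i (X \<omega>)) (Y \<omega> - fstar (X \<omega>))) \<le> 2 * (norm (\<phi> (X \<omega>)) * norm (Y \<omega> - fstar (X \<omega>)))"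
        by simp
    qed
  qed
  moreover have "(\<lambda>i. \<integral>\<omega>. inner (s i (X \<omega>)) (Y \<omega> - fstar (X \<omega>)) \<partial>M) = (\<lambda>i. 0)"
    using GP_simple[OF s] by simp
  ultimately show ?thesis using LIMSEQ_unique tendsto_const by metis
qed

definition fk :: "nat \<Rightarrow> 'x \<Rightarrow> 'y" where
  "fk k x = (if norm (fstar x) \<le> real k then fstar x else 0)"

lemma fk_meas[measurable]: "fk k \<in> borel_measurable MX"
  unfolding fk_def by measurable

lemma fk_bound: "norm (fk k x) \<le> real k"
  unfolding fk_def by auto

lemma fk_L2M: "L2M M (\<lambda>\<omega>. fk k (X \<omega>))"
  by (rule L2M_bounded[where C="real k"]) (auto simp: fk_bound finite_measure_axioms)

lemma fk_sq_le: "(\<integral>\<omega>. (norm (fk k (X \<omega>)))^2 \<partial>M) \<le> (\<integral>\<omega>. (norm (Y \<omega>))^2 \<partial>M)"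
proof -
  have i1: "integrable M (\<lambda>\<omega>. norm (fk k (X \<omega>)) * norm (Y \<omega> - fstar (X \<omega>)))"
  proof (rule Bochner_Integration.integrable_bound[where f="\<lambda>\<omega>. real k * norm (Y \<omega> - fstar (X \<omega>))"])
    show "integrable M (\<lambda>\<omega>. real k * norm (Y \<omega> - fstar (X \<omega>)))"
      using integrable_norm_rn[OF R_int] by simp
    show "(\<lambda>\<omega>. norm (fk k (X \<omega>)) * norm (Y \<omega> - fstar (X \<omega>))) \<in> borel_measurable M" by measurable
    show "AE \<omega> in M. norm (norm (fk k (X \<omega>)) * norm (Y \<omega> - fstar (X \<omega>))) \<le> norm (real k * norm (Y \<omega> - fstar (X \<omega>)))"
      using fk_bound by (auto intro!: AE_I2 mult_right_mono)
  qed
  have z: "(\<integral>\<omega>. inner (fk k (X \<omega>)) (Y \<omega> - fstar (X \<omega>)) \<partial>M) = 0"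
    by (rule GP[OF fk_meas i1])
  have iY: "integrable M (\<lambda>\<omega>. inner (fk k (X \<omega>)) (Y \<omega>))"
    by (rule L2M_inner_int[OF fk_L2M Y_L2M])
  have iF: "integrable M (\<lambda>\<omega>. inner (fk k (X \<omega>)) (fstar (X \<omega>)))"
  proof (rule Bochner_Integration.integrable_bound[where f="\<lambda>\<omega>. real k * norm (fstar (X \<omega>))"])
    show "integrable M (\<lambda>\<omega>. real k * norm (fstar (X \<omega>)))"
      using integrable_norm_rn[OF fX_int] by simp
    show "(\<lambda>\<omega>. inner (fk k (X \<omega>)) (fstar (X \<omega>))) \<in> borel_measurable M" by measurable
    show "AE \<omega> in M. norm (inner (fk k (X \<omega>)) (fstar (X \<omega>))) \<le> norm (real k * norm (fstar (X \<omega>)))"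
    proof (rule AE_I2)
      fix \<omega>
      have "norm (inner (fk k (X \<omega>)) (fstar (X \<omega>))) \<le> norm (fk k (X \<omega>)) * norm (fstar (X \<omega>))"
        using Cauchy_Schwarz_ineq2 by simp
      also have "\<dots> \<le> real k * norm (fstar (X \<omega>))" using fk_bound by (intro mult_right_mono) auto
      finally show "norm (inner (fk k (X \<omega>)) (fstar (X \<omega>))) \<le> norm (real k * norm (fstar (X \<omega>)))" by simp
    qed
  qed
  have eq: "inner (fk k x) (fstar x) = (norm (fk k x))^2" for x
    unfolding fk_def by (simp add: power2_norm_eq_inner)
  have "(\<integral>\<omega>. inner (fk k (X \<omega>)) (Y \<omega>) \<partial>M) - (\<integral>\<omega>. inner (fk k (X \<omega>)) (fstar (X \<omega>)) \<partial>M) = 0"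
    using z iY iF by (simp add: inner_diff_right)
  then have e1: "(\<integral>\<omega>. (norm (fk k (X \<omega>)))^2 \<partial>M) = (\<integral>\<omega>. inner (fk k (X \<omega>)) (Y \<omega>) \<partial>M)"
    using eq by simp
  have "(\<integral>\<omega>. inner (fk k (X \<omega>)) (Y \<omega>) \<partial>M) \<le> (\<integral>\<omega>. ((norm (fk k (X \<omega>)))^2 + (norm (Y \<omega>))^2) / 2 \<partial>M)"
  proof (rule Bochner_Integration.integral_mono[OF iY])
    show "integrable M (\<lambda>\<omega>. ((norm (fk k (X \<omega>)))^2 + (norm (Y \<omega>))^2) / 2)"
      using fk_L2M Y_L2M unfolding L2M_def by auto
    fix \<omega>
    show "inner (fk k (X \<omega>)) (Y \<omega>) \<le> ((norm (fk k (X \<omega>)))^2 + (norm (Y \<omega>))^2) / 2"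
    proof -
      have "2 * inner (fk k (X \<omega>)) (Y \<omega>) \<le> (norm (fk k (X \<omega>)))^2 + (norm (Y \<omega>))^2"
        using norm_diff_sq[of "fk k (X \<omega>)" "Y \<omega>"] zero_le_power2[of "norm (fk k (X \<omega>) - Y \<omega>)"] by linarith
      then show ?thesis by simp
    qed
  qed
  also have "\<dots> = ((\<integral>\<omega>. (norm (fk k (X \<omega>)))^2 \<partial>M) + (\<integral>\<omega>. (norm (Y \<omega>))^2 \<partial>M)) / 2"
    using fk_L2M Y_L2M unfolding L2M_def by simp
  finally have "(\<integral>\<omega>. inner (fk k (X \<omega>)) (Y \<omega>) \<partial>M) \<le> ((\<integral>\<omega>. (norm (fk k (X \<omega>)))^2 \<partial>M) + (\<integral>\<omega>. (norm (Y \<omega>))^2 \<partial>M)) / 2" .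
  from half_le_aux[OF this e1] show ?thesis .
qed

lemma fX_L2M: "L2M M (\<lambda>\<omega>. fstar (X \<omega>))"
  unfolding L2M_def
proof
  show "(\<lambda>\<omega>. fstar (X \<omega>)) \<in> borel_measurable M" by measurable
  let ?f = "\<lambda>k \<omega>. (norm (fk k (X \<omega>)))^2"
  have fi: "integrable M (?f k)" for k using fk_L2M unfolding L2M_def by auto
  have mono_int: "incseq (\<lambda>k. integral\<^sup>L M (?f k))"
  proof (rule incseq_SucI)
    fix k
    show "integral\<^sup>L M (?f k) \<le> integral\<^sup>L M (?f (Suc k))"
      by (rule Bochner_Integration.integral_mono[OF fi fi]) (auto simp: fk_def)
  qed
  have bdd: "bdd_above (range (\<lambda>k. integral\<^sup>L M (?f k)))"
    using fk_sq_le by (intro bdd_aboveI2) auto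
  show "integrable M (\<lambda>\<omega>. (norm (fstar (X \<omega>)))^2)"
  proof (rule integrable_monotone_convergence[OF fi])
    show "AE \<omega> in M. mono (\<lambda>k. ?f k \<omega>)"
      by (intro AE_I2 monoI) (auto simp: fk_def)
    show "AE \<omega> in M. (\<lambda>k. ?f k \<omega>) \<longlonglongrightarrow> (norm (fstar (X \<omega>)))^2"
    proof (intro AE_I2)
      fix \<omega>
      obtain N :: nat where N: "norm (fstar (X \<omega>)) \<le> N" using real_arch_simple by blast
      have "\<forall>k\<ge>N. ?f k \<omega> = (norm (fstar (X \<omega>)))^2"
        using N by (auto simp: fk_def)
      then show "(\<lambda>k. ?f k \<omega>) \<longlonglongrightarrow> (norm (fstar (X \<omega>)))^2"
        by (intro tendsto_eventually) (auto simp: eventually_sequentially)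
    qed
    show "(\<lambda>k. integral\<^sup>L M (?f k)) \<longlonglongrightarrow> (SUP k. integral\<^sup>L M (?f k))"
      by (rule LIMSEQ_incseq_SUP[OF bdd mono_int])
    show "(\<lambda>\<omega>. (norm (fstar (X \<omega>)))^2) \<in> borel_measurable M" by measurable
  qed
qed

lemma R_L2M: "L2M M (\<lambda>\<omega>. Y \<omega> - fstar (X \<omega>))"
  by (rule L2M_diff[OF Y_L2M fX_L2M])

lemma GP_L2:
  assumes phi[measurable]: "\<phi> \<in> borel_measurable MX" and L: "L2M M (\<lambda>\<omega>. \<phi> (X \<omega>))"
  shows "(\<integral>\<omega>. inner (\<phi> (X \<omega>)) (Y \<omega> - fstar (X \<omega>)) \<partial>M) = 0"
  by (rule GP[OF phi L2M_normprod_int[OF L R_L2M]])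

lemma risk_dec:
  "(\<integral>\<omega>. (norm (emb h (X \<omega>) - Y \<omega>))^2 \<partial>M)
     = (\<integral>\<omega>. (norm (emb h (X \<omega>) - fstar (X \<omega>)))^2 \<partial>M) + (\<integral>\<omega>. (norm (fstar (X \<omega>) - Y \<omega>))^2 \<partial>M)"
proof -
  let ?d = "\<lambda>\<omega>. emb h (X \<omega>) - fstar (X \<omega>)"
  let ?R = "\<lambda>\<omega>. Y \<omega> - fstar (X \<omega>)"
  have dL: "L2M M ?d" by (rule L2M_diff[OF hX_L2M fX_L2M])
  have z: "(\<integral>\<omega>. inner (?d \<omega>) (?R \<omega>) \<partial>M) = 0"
    by (rule GP_L2[where \<phi>="\<lambda>x. emb h x - fstar x", OF _ dL]) measurable
  have pw: "(norm (emb h (X \<omega>) - Y \<omega>))^2 = (norm (?d \<omega>))^2 - 2 * inner (?d \<omega>) (?R \<omega>) + (norm (fstar (X \<omega>) - Y \<omega>))^2" for \<omega>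
  proof -
    have "emb h (X \<omega>) - Y \<omega> = ?d \<omega> - ?R \<omega>" by simp
    then have "(norm (emb h (X \<omega>) - Y \<omega>))^2 = (norm (?d \<omega>))^2 - 2 * inner (?d \<omega>) (?R \<omega>) + (norm (?R \<omega>))^2"
      using norm_diff_sq by metis
    moreover have "norm (?R \<omega>) = norm (fstar (X \<omega>) - Y \<omega>)" by (rule norm_minus_commute)
    ultimately show ?thesis by simp
  qed
  have i1: "integrable M (\<lambda>\<omega>. (norm (?d \<omega>))^2)" using dL unfolding L2M_def by auto
  have i2: "integrable M (\<lambda>\<omega>. inner (?d \<omega>) (?R \<omega>))" by (rule L2M_inner_int[OF dL R_L2M])
  have i3: "integrable M (\<lambda>\<omega>. (norm (fstar (X \<omega>) - Y \<omega>))^2)"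
    using R_L2M unfolding L2M_def by (simp add: norm_minus_commute)
  have "(\<integral>\<omega>. (norm (emb h (X \<omega>) - Y \<omega>))^2 \<partial>M)
      = (\<integral>\<omega>. (norm (?d \<omega>))^2 - 2 * inner (?d \<omega>) (?R \<omega>) + (norm (fstar (X \<omega>) - Y \<omega>))^2 \<partial>M)"
    by (simp only: pw)
  also have "\<dots> = (\<integral>\<omega>. (norm (?d \<omega>))^2 \<partial>M) - 2 * (\<integral>\<omega>. inner (?d \<omega>) (?R \<omega>) \<partial>M) + (\<integral>\<omega>. (norm (fstar (X \<omega>) - Y \<omega>))^2 \<partial>M)"
    using i1 i2 i3 by simp
  finally show ?thesis using z by simp
qed

end

context krr begin

lemma int_abs_le:
  fixes f :: "'a \<Rightarrow> real"
  assumes "integrable M f" "\<And>\<omega>. \<omega> \<in> space M \<Longrightarrow> \<bar>f \<omega>\<bar> \<le> C"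
  shows "\<bar>\<integral>\<omega>. f \<omega> \<partial>M\<bar> \<le> C"
proof -
  have "\<bar>\<integral>\<omega>. f \<omega> \<partial>M\<bar> \<le> (\<integral>\<omega>. \<bar>f \<omega>\<bar> \<partial>M)" by (rule Bochner_Integration.integral_abs_bound)
  also have "\<dots> \<le> (\<integral>\<omega>. C \<partial>M)"
    using assms by (intro Bochner_Integration.integral_mono) auto
  also have "\<dots> = C" by (simp add: prob_space)
  finally show ?thesis .
qed

lemma int_hh: "integrable M (\<lambda>\<omega>. inner (emb u (X \<omega>)) (emb v (X \<omega>)))"
  by (rule L2M_inner_int[OF hX_L2M hX_L2M])

lemma int_Yh: "integrable M (\<lambda>\<omega>. inner (Y \<omega>) (emb v (X \<omega>)))"
  by (rule L2M_inner_int[OF Y_L2M hX_L2M])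

lemma inner_emb_bound: "\<bar>inner (emb u x) (emb v x)\<bar> \<le> \<kappa>^2 * (norm u * norm v)"
proof -
  have "\<bar>inner (emb u x) (emb v x)\<bar> \<le> norm (emb u x) * norm (emb v x)" by (rule Cauchy_Schwarz_ineq2)
  also have "\<dots> \<le> (\<kappa> * norm u) * (\<kappa> * norm v)"
    using ebound kap by (intro mult_mono) auto
  also have "\<dots> = \<kappa>^2 * (norm u * norm v)" by (simp add: power2_eq_square algebra_simps)
  finally show ?thesis .
qed

definition aform :: "real \<Rightarrow> 'h \<Rightarrow> 'h \<Rightarrow> real" where
  "aform lam u v = (\<integral>\<omega>. inner (emb u (X \<omega>)) (emb v (X \<omega>)) \<partial>M) + lam * inner u v"

definition bform :: "'h \<Rightarrow> real" where
  "bform v = (\<integral>\<omega>. inner (Y \<omega>) (emb v (X \<omega>)) \<partial>M)"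

lemma aform_bb: "bounded_bilinear (aform lam)"
proof
  fix a a' b b' :: 'h and r :: real
  show "aform lam (a + a') b = aform lam a b + aform lam a' b"
    unfolding aform_def using int_hh[of a b] int_hh[of a' b]
    by (simp add: emb_add inner_add_left algebra_simps)
  show "aform lam b (a + a') = aform lam b a + aform lam b a'"
    unfolding aform_def using int_hh[of b a] int_hh[of b a']
    by (simp add: emb_add inner_add_right algebra_simps)
  show "aform lam (r *\<^sub>R a) b = r *\<^sub>R aform lam a b"
    unfolding aform_def by (simp add: emb_scaleR algebra_simps)
  show "aform lam a (r *\<^sub>R b) = r *\<^sub>R aform lam a b"
    unfolding aform_def by (simp add: emb_scaleR algebra_simps)
next
  show "\<exists>K. \<forall>a b. norm (aform lam a b) \<le> norm a * norm b * K"
  proof (intro exI allI)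
    fix a b :: 'h
    have "\<bar>\<integral>\<omega>. inner (emb a (X \<omega>)) (emb b (X \<omega>)) \<partial>M\<bar> \<le> \<kappa>^2 * (norm a * norm b)"
      by (rule int_abs_le[OF int_hh]) (rule inner_emb_bound)
    moreover have "\<bar>lam * inner a b\<bar> \<le> \<bar>lam\<bar> * (norm a * norm b)"
      by (simp add: abs_mult Cauchy_Schwarz_ineq2 mult_left_mono)
    ultimately have "\<bar>aform lam a b\<bar> \<le> \<kappa>^2 * (norm a * norm b) + \<bar>lam\<bar> * (norm a * norm b)"
      unfolding aform_def
      using abs_triangle_ineq[of "\<integral>\<omega>. inner (emb a (X \<omega>)) (emb b (X \<omega>)) \<partial>M" "lam * inner a b"] by argo
    then show "norm (aform lam a b) \<le> norm a * norm b * (\<kappa>^2 + \<bar>lam\<bar>)"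
      by (simp add: algebra_simps)
  qed
qed

lemma bform_bl: "bounded_linear bform"
proof (rule bounded_linear_intro)
  fix a b :: 'h and r :: real
  show "bform (a + b) = bform a + bform b"
    unfolding bform_def using int_Yh[of a] int_Yh[of b] by (simp add: emb_add inner_add_right)
  show "bform (r *\<^sub>R a) = r *\<^sub>R bform a"
    unfolding bform_def by (simp add: emb_scaleR)
next
  fix v :: 'h
  have iY: "integrable M (\<lambda>\<omega>. norm (Y \<omega>))" by (rule integrable_norm_rn[OF Y_int])
  have "\<bar>bform v\<bar> \<le> (\<integral>\<omega>. \<bar>inner (Y \<omega>) (emb v (X \<omega>))\<bar> \<partial>M)"
    unfolding bform_def by (rule Bochner_Integration.integral_abs_bound)
  also have "\<dots> \<le> (\<integral>\<omega>. norm (Y \<omega>) * (\<kappa> * norm v) \<partial>M)"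
  proof (rule Bochner_Integration.integral_mono)
    show "integrable M (\<lambda>\<omega>. \<bar>inner (Y \<omega>) (emb v (X \<omega>))\<bar>)" using int_Yh by auto
    show "integrable M (\<lambda>\<omega>. norm (Y \<omega>) * (\<kappa> * norm v))" using iY by simp
    fix \<omega>
    have "\<bar>inner (Y \<omega>) (emb v (X \<omega>))\<bar> \<le> norm (Y \<omega>) * norm (emb v (X \<omega>))" by (rule Cauchy_Schwarz_ineq2)
    also have "\<dots> \<le> norm (Y \<omega>) * (\<kappa> * norm v)" using ebound by (intro mult_left_mono) auto
    finally show "\<bar>inner (Y \<omega>) (emb v (X \<omega>))\<bar> \<le> norm (Y \<omega>) * (\<kappa> * norm v)" .
  qed
  also have "\<dots> = norm v * (\<kappa> * (\<integral>\<omega>. norm (Y \<omega>) \<partial>M))" by (simp add: algebra_simps)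
  finally show "norm (bform v) \<le> norm v * (\<kappa> * (\<integral>\<omega>. norm (Y \<omega>) \<partial>M))" by simp
qed

lemma aform_coer: "aform lam u u \<ge> lam * (norm u)^2"
proof -
  have "0 \<le> (\<integral>\<omega>. inner (emb u (X \<omega>)) (emb u (X \<omega>)) \<partial>M)"
    by (rule Bochner_Integration.integral_nonneg) simp
  then show ?thesis unfolding aform_def by (simp add: power2_norm_eq_inner)
qed

lemma aform_sym: "aform lam u v = aform lam v u"
  unfolding aform_def by (simp add: inner_commute)

definition flam :: "real \<Rightarrow> 'h" where
  "flam lam = (SOME u. \<forall>v. aform lam u v = bform v)"

lemma flam_foc:
  assumes "lam > 0"
  shows "aform lam (flam lam) v = bform v"
proof -
  have "\<exists>u. \<forall>v. aform lam u v = bform v"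
    by (rule lax_milgram[OF aform_bb aform_sym assms aform_coer bform_bl])
  then have "\<forall>v. aform lam (flam lam) v = bform v" unfolding flam_def by (rule someI_ex)
  then show ?thesis by blast
qed

definition Jr :: "real \<Rightarrow> 'h \<Rightarrow> real" where
  "Jr lam h = (\<integral>\<omega>. (norm (emb h (X \<omega>) - Y \<omega>))^2 \<partial>M) + lam * (norm h)^2"

lemma hY_L2M: "L2M M (\<lambda>\<omega>. emb h (X \<omega>) - Y \<omega>)"
  by (rule L2M_diff[OF hX_L2M Y_L2M])

lemma J_expand:
  assumes lam: "lam > 0"
  shows "Jr lam h = Jr lam (flam lam) + (\<integral>\<omega>. (norm (emb (h - flam lam) (X \<omega>)))^2 \<partial>M)
            + lam * (norm (h - flam lam))^2"
proof -
  define f where "f = flam lam"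
  define d where "d = h - f"
  have hd: "h = f + d" unfolding d_def by simp
  have foc: "(\<integral>\<omega>. inner (emb f (X \<omega>)) (emb d (X \<omega>)) \<partial>M) + lam * inner f d
      = (\<integral>\<omega>. inner (Y \<omega>) (emb d (X \<omega>)) \<partial>M)"
    using flam_foc[OF lam, of d] unfolding aform_def bform_def f_def .
  have pw: "(norm (emb h (X \<omega>) - Y \<omega>))^2 = (norm (emb f (X \<omega>) - Y \<omega>))^2
      + 2 * (inner (emb f (X \<omega>)) (emb d (X \<omega>)) - inner (Y \<omega>) (emb d (X \<omega>))) + (norm (emb d (X \<omega>)))^2" for \<omega>
  proof -
    have "emb h (X \<omega>) - Y \<omega> = (emb f (X \<omega>) - Y \<omega>) + emb d (X \<omega>)" by (simp add: hd emb_add)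
    then have "(norm (emb h (X \<omega>) - Y \<omega>))^2 = (norm (emb f (X \<omega>) - Y \<omega>))^2 + 2 * inner (emb f (X \<omega>) - Y \<omega>) (emb d (X \<omega>)) + (norm (emb d (X \<omega>)))^2"
      using norm_add_sq by metis
    then show ?thesis by (simp add: inner_diff_left)
  qed
  have i1: "integrable M (\<lambda>\<omega>. (norm (emb f (X \<omega>) - Y \<omega>))^2)" using hY_L2M unfolding L2M_def by auto
  have i2: "integrable M (\<lambda>\<omega>. (norm (emb d (X \<omega>)))^2)" using hX_L2M unfolding L2M_def by auto
  have "(\<integral>\<omega>. (norm (emb h (X \<omega>) - Y \<omega>))^2 \<partial>M) = (\<integral>\<omega>. (norm (emb f (X \<omega>) - Y \<omega>))^2
      + 2 * (inner (emb f (X \<omega>)) (emb d (X \<omega>)) - inner (Y \<omega>) (emb d (X \<omega>))) + (norm (emb d (X \<omega>)))^2 \<partial>M)"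
    by (simp only: pw)
  also have "\<dots> = (\<integral>\<omega>. (norm (emb f (X \<omega>) - Y \<omega>))^2 \<partial>M)
      + 2 * ((\<integral>\<omega>. inner (emb f (X \<omega>)) (emb d (X \<omega>)) \<partial>M) - (\<integral>\<omega>. inner (Y \<omega>) (emb d (X \<omega>)) \<partial>M))
      + (\<integral>\<omega>. (norm (emb d (X \<omega>)))^2 \<partial>M)"
    using i1 i2 int_hh[of f d] int_Yh[of d] by simp
  finally have e1: "(\<integral>\<omega>. (norm (emb h (X \<omega>) - Y \<omega>))^2 \<partial>M) = (\<integral>\<omega>. (norm (emb f (X \<omega>) - Y \<omega>))^2 \<partial>M)
      - 2 * (lam * inner f d) + (\<integral>\<omega>. (norm (emb d (X \<omega>)))^2 \<partial>M)"
    using foc by argo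
  have e2: "(norm h)^2 = (norm f)^2 + 2 * inner f d + (norm d)^2"
    unfolding hd by (rule norm_add_sq)
  show ?thesis unfolding Jr_def f_def[symmetric] d_def[symmetric] e1 e2
    by (simp add: algebra_simps)
qed

lemma flam_min:
  assumes "lam > 0" shows "Jr lam (flam lam) \<le> Jr lam h"
proof -
  have "0 \<le> (\<integral>\<omega>. (norm (emb (h - flam lam) (X \<omega>)))^2 \<partial>M)"
    by (rule Bochner_Integration.integral_nonneg) simp
  moreover have "0 \<le> lam * (norm (h - flam lam))^2" using assms by simp
  ultimately show ?thesis using J_expand[OF assms, of h] by argo
qed

lemma flam_b:
  assumes "lam > 0"
  shows "(\<integral>\<omega>. (norm (emb (flam lam) (X \<omega>) - Y \<omega>))^2 \<partial>M) + lam * (norm (flam lam))^2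
          \<le> (\<integral>\<omega>. (norm (Y \<omega>))^2 \<partial>M)"
  using flam_min[OF assms, of 0] unfolding Jr_def by (simp add: emb_zero)

lemma flam_approx:
  assumes "lam > 0"
  shows "(\<integral>\<omega>. (norm (emb (flam lam) (X \<omega>) - fstar (X \<omega>)))^2 \<partial>M)
          \<le> (\<integral>\<omega>. (norm (emb h (X \<omega>) - fstar (X \<omega>)))^2 \<partial>M) + lam * (norm h)^2"
proof -
  have "Jr lam (flam lam) \<le> Jr lam h" by (rule flam_min[OF assms])
  then have "(\<integral>\<omega>. (norm (emb (flam lam) (X \<omega>) - fstar (X \<omega>)))^2 \<partial>M) + lam * (norm (flam lam))^2
      \<le> (\<integral>\<omega>. (norm (emb h (X \<omega>) - fstar (X \<omega>)))^2 \<partial>M) + lam * (norm h)^2"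
    unfolding Jr_def risk_dec by argo
  moreover have "0 \<le> lam * (norm (flam lam))^2" using assms by simp
  ultimately show ?thesis by argo
qed

end

lemma dense_seq_ex:
  "\<exists>d :: nat \<Rightarrow> 'b::{metric_space,second_countable_topology}. \<forall>x e. e > 0 \<longrightarrow> (\<exists>j. dist (d j) x < e)"
proof -
  obtain D :: "'b set" where "countable D" and D: "\<And>X. open X \<Longrightarrow> X \<noteq> {} \<Longrightarrow> \<exists>d\<in>D. d \<in> X"
    by (erule countable_dense_setE)
  define e where "e = from_nat_into D"
  have "\<exists>j. dist (e j) x < r" if r: "r > 0" for x r
  proof -
    obtain d where "d \<in> D" and d: "d \<in> ball x r"
      using D[of "ball x r"] r by auto
    from \<open>d \<in> D\<close> D[of UNIV] \<open>countable D\<close> obtain i where "d = e i"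
      unfolding e_def by (auto dest: from_nat_into_surj)
    with d show ?thesis by (auto simp: dist_commute)
  qed
  then show ?thesis by blast
qed

definition dseq :: "nat \<Rightarrow> 'b::{metric_space,second_countable_topology}" where
  "dseq = (SOME d. \<forall>x e. e > 0 \<longrightarrow> (\<exists>j. dist (d j) x < e))"

lemma dseq_dense: "e > 0 \<Longrightarrow> \<exists>j. dist (dseq j) x < e"
  using someI_ex[OF dense_seq_ex] unfolding dseq_def by blast

lemma dseq_sq_close:
  fixes x :: "'b::{real_normed_vector,second_countable_topology}"
  assumes "\<delta> > 0" shows "\<exists>j. (norm (dseq j - x))^2 < \<delta>"
proof -
  obtain j where j: "dist (dseq j) x < min 1 \<delta>" using dseq_dense[of "min 1 \<delta>" x] assms by auto
  let ?t = "norm (dseq j - x)"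
  have t: "?t < min 1 \<delta>" using j by (simp add: dist_norm)
  have "?t^2 = ?t * ?t" by (simp add: power2_eq_square)
  also have "\<dots> \<le> ?t * 1" using t by (intro mult_left_mono) auto
  also have "\<dots> < \<delta>" using t by simp
  finally show ?thesis by blast
qed

lemma meas_approx:
  fixes F :: "'a \<Rightarrow> 'b::{metric_space,second_countable_topology}" and P :: "nat \<Rightarrow> nat \<Rightarrow> 'a \<Rightarrow> bool"
  assumes Pm: "\<And>k j. {\<omega>\<in>space M. P k j \<omega>} \<in> sets M"
    and Pex: "\<And>k \<omega>. \<omega> \<in> space M \<Longrightarrow> \<exists>j. P k j \<omega>"
    and Pd: "\<And>k j \<omega>. \<omega> \<in> space M \<Longrightarrow> P k j \<omega> \<Longrightarrow> dist (dseq j) (F \<omega>) \<le> 1 / Suc k"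
  shows "F \<in> borel_measurable M"
proof (rule borel_measurable_LIMSEQ_metric)
  define G where "G k \<omega> = (dseq (LEAST j. P k j \<omega>) :: 'b)" for k \<omega>
  show "(\<lambda>\<omega>. G k \<omega>) \<in> borel_measurable M" for k
  proof -
    have [measurable]: "(\<lambda>\<omega>. P k j \<omega>) \<in> measurable M (count_space UNIV)" for j
      unfolding pred_def by (rule Pm)
    have "(\<lambda>\<omega>. LEAST j. P k j \<omega>) \<in> measurable M (count_space UNIV)"
      by (rule measurable_Least) fact
    moreover have "(dseq :: nat \<Rightarrow> 'b) \<in> measurable (count_space UNIV) borel" by simp
    ultimately show ?thesis unfolding G_def by (rule measurable_compose)
  qed
  fix \<omega> assume \<omega>: "\<omega> \<in> space M"
  have d: "dist (G k \<omega>) (F \<omega>) \<le> 1 / Suc k" for k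
  proof -
    have "P k (LEAST j. P k j \<omega>) \<omega>" using Pex[OF \<omega>, of k] by (rule LeastI_ex)
    from Pd[OF \<omega> this] show ?thesis unfolding G_def .
  qed
  show "(\<lambda>k. G k \<omega>) \<longlonglongrightarrow> F \<omega>"
  proof (rule metric_LIMSEQ_I)
    fix r :: real assume r: "r > 0"
    obtain N :: nat where N: "1 / r < N" using reals_Archimedean2 by blast
    show "\<exists>no. \<forall>n\<ge>no. dist (G n \<omega>) (F \<omega>) < r"
    proof (intro exI allI impI)
      fix n assume n: "N \<le> n"
      have "1 / r < real (Suc n)" using N n by simp
      then have "1 / real (Suc n) < r" using r by (simp add: divide_less_eq mult.commute)
      with d[of n] show "dist (G n \<omega>) (F \<omega>) < r" by simp
    qed
  qed
qed

lemma sq_le_dist: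
  fixes a b :: "'b::real_normed_vector"
  assumes "(norm (a - b))^2 \<le> (1 / real (Suc k))^2"
  shows "dist a b \<le> 1 / Suc k"
proof -
  have "norm (a - b) \<le> 1 / real (Suc k)"
    by (rule power2_le_imp_le[OF assms]) simp
  then show ?thesis by (simp add: dist_norm)
qed

lemma weak_meas:
  fixes F :: "'a \<Rightarrow> 'b::{real_inner,second_countable_topology}"
  assumes wm: "\<And>g. (\<lambda>\<omega>. inner (F \<omega>) g) \<in> borel_measurable M"
  shows "F \<in> borel_measurable M"
proof (rule meas_approx[where P="\<lambda>k j \<omega>. \<forall>i. 2 * inner (F \<omega> - dseq j) (dseq i) - (norm (dseq i :: 'b))^2 \<le> (1 / real (Suc k))^2"])
  fix k j
  have [measurable]: "(\<lambda>\<omega>. inner (F \<omega>) g) \<in> borel_measurable M" for g by (rule wm)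
  have "{\<omega> \<in> space M. \<forall>i. 2 * inner (F \<omega> - dseq j) (dseq i) - (norm (dseq i :: 'b))^2 \<le> (1 / real (Suc k))^2}
     = {\<omega> \<in> space M. \<forall>i. 2 * (inner (F \<omega>) (dseq i) - inner (dseq j :: 'b) (dseq i)) - (norm (dseq i :: 'b))^2 \<le> (1 / real (Suc k))^2}"
    by (simp add: inner_diff_left)
  also have "\<dots> \<in> sets M" by measurable
  finally show "{\<omega> \<in> space M. \<forall>i. 2 * inner (F \<omega> - dseq j) (dseq i) - (norm (dseq i :: 'b))^2 \<le> (1 / real (Suc k))^2} \<in> sets M" .
next
  fix k \<omega>
  have "(1 / real (Suc k))^2 > 0" by simp
  from dseq_sq_close[OF this, of "F \<omega>"] obtain j where j: "(norm (dseq j - F \<omega>))^2 < (1 / real (Suc k))^2" by blast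
  show "\<exists>j. \<forall>i. 2 * inner (F \<omega> - dseq j) (dseq i) - (norm (dseq i :: 'b))^2 \<le> (1 / real (Suc k))^2"
  proof (intro exI allI)
    fix i
    let ?v = "F \<omega> - dseq j"
    have "0 \<le> (norm (?v - dseq i))^2" by simp
    then have "2 * inner ?v (dseq i) - (norm (dseq i :: 'b))^2 \<le> (norm ?v)^2"
      using norm_diff_sq[of ?v "dseq i"] by argo
    also have "(norm ?v)^2 = (norm (dseq j - F \<omega>))^2" by (simp add: norm_minus_commute)
    finally show "2 * inner ?v (dseq i) - (norm (dseq i :: 'b))^2 \<le> (1 / real (Suc k))^2" using j by argo
  qed
next
  fix k j \<omega>
  assume P: "\<forall>i. 2 * inner (F \<omega> - dseq j) (dseq i) - (norm (dseq i :: 'b))^2 \<le> (1 / real (Suc k))^2"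
  let ?v = "F \<omega> - dseq j"
  let ?t = "(1 / real (Suc k))^2"
  have "(norm ?v)^2 \<le> ?t"
  proof (rule ccontr)
    assume "\<not> (norm ?v)^2 \<le> ?t"
    then have "(norm ?v)^2 - ?t > 0" by argo
    from dseq_sq_close[OF this, of ?v] obtain i where i: "(norm (dseq i - ?v))^2 < (norm ?v)^2 - ?t" by blast
    have "(norm (?v - dseq i))^2 = (norm ?v)^2 - 2 * inner ?v (dseq i) + (norm (dseq i :: 'b))^2"
      by (rule norm_diff_sq)
    moreover have "(norm (?v - dseq i))^2 = (norm (dseq i - ?v))^2" by (simp add: norm_minus_commute)
    ultimately have "2 * inner ?v (dseq i) - (norm (dseq i :: 'b))^2 > ?t" using i by argo
    with P show False by (meson not_le)
  qed
  moreover have "norm ?v = norm (dseq j - F \<omega>)" by (rule norm_minus_commute)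
  ultimately show "dist (dseq j) (F \<omega>) \<le> 1 / Suc k" using sq_le_dist[of "dseq j" "F \<omega>" k] by simp
qed

lemma argmin_meas:
  fixes F :: "'a \<Rightarrow> 'b::{real_normed_vector,second_countable_topology}" and J :: "'a \<Rightarrow> 'b \<Rightarrow> real"
  assumes Jm: "\<And>h. (\<lambda>\<omega>. J \<omega> h) \<in> borel_measurable M"
    and c: "c > 0"
    and lower: "\<And>\<omega> h. \<omega> \<in> space M \<Longrightarrow> J \<omega> (F \<omega>) + c * (norm (h - F \<omega>))^2 \<le> J \<omega> h"
    and upper: "\<And>\<omega> h. \<omega> \<in> space M \<Longrightarrow> J \<omega> h \<le> J \<omega> (F \<omega>) + C \<omega> * (norm (h - F \<omega>))^2"
  shows "F \<in> borel_measurable M"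
proof (rule meas_approx[where P="\<lambda>k j \<omega>. \<forall>i. J \<omega> (dseq j) \<le> J \<omega> (dseq i) + c * (1 / real (Suc k))^2"])
  fix k j
  have [measurable]: "(\<lambda>\<omega>. J \<omega> h) \<in> borel_measurable M" for h by (rule Jm)
  show "{\<omega> \<in> space M. \<forall>i. J \<omega> (dseq j) \<le> J \<omega> (dseq i) + c * (1 / real (Suc k))^2} \<in> sets M"
    by measurable
next
  have close: "\<exists>i. J \<omega> (dseq i) < J \<omega> (F \<omega>) + e" if \<omega>: "\<omega> \<in> space M" and e: "e > 0" for \<omega> e
  proof -
    have pos: "\<bar>C \<omega>\<bar> + 1 > 0" by simp
    then have "e / (\<bar>C \<omega>\<bar> + 1) > 0" using e by simp
    from dseq_sq_close[OF this, of "F \<omega>"] obtain i where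
      i: "(norm (dseq i - F \<omega>))^2 < e / (\<bar>C \<omega>\<bar> + 1)" by blast
    let ?s = "(norm (dseq i - F \<omega>))^2"
    have "C \<omega> * ?s \<le> (\<bar>C \<omega>\<bar> + 1) * ?s" by (intro mult_right_mono) auto
    also have "\<dots> < (\<bar>C \<omega>\<bar> + 1) * (e / (\<bar>C \<omega>\<bar> + 1))" using i pos by (intro mult_strict_left_mono) auto
    also have "\<dots> = e" using pos by simp
    finally have "C \<omega> * ?s < e" .
    with upper[OF \<omega>, of "dseq i"] have "J \<omega> (dseq i) < J \<omega> (F \<omega>) + e" by argo
    then show ?thesis by blast
  qed
  fix k \<omega> assume \<omega>: "\<omega> \<in> space M"
  let ?t = "c * (1 / real (Suc k))^2"
  have "?t > 0" using c by simp
  from close[OF \<omega> this] obtain j where j: "J \<omega> (dseq j) < J \<omega> (F \<omega>) + ?t" by blast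
  show "\<exists>j. \<forall>i. J \<omega> (dseq j) \<le> J \<omega> (dseq i) + ?t"
  proof (intro exI allI)
    fix i
    have "J \<omega> (F \<omega>) \<le> J \<omega> (dseq i)"
      using lower[OF \<omega>, of "dseq i"] c by (smt (verit) mult_nonneg_nonneg zero_le_power2)
    then show "J \<omega> (dseq j) \<le> J \<omega> (dseq i) + ?t" using j by argo
  qed
next
  fix k j \<omega> assume \<omega>: "\<omega> \<in> space M"
    and P: "\<forall>i. J \<omega> (dseq j) \<le> J \<omega> (dseq i) + c * (1 / real (Suc k))^2"
  let ?t = "c * (1 / real (Suc k))^2"
  let ?s = "(norm (dseq j - F \<omega>))^2"
  have "c * ?s \<le> ?t"
  proof (rule field_le_epsilon)
    fix e :: real assume e: "e > 0"
    have close: "\<exists>i. J \<omega> (dseq i) < J \<omega> (F \<omega>) + e"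
    proof -
      have pos: "\<bar>C \<omega>\<bar> + 1 > 0" by simp
      then have "e / (\<bar>C \<omega>\<bar> + 1) > 0" using e by simp
      from dseq_sq_close[OF this, of "F \<omega>"] obtain i where
        i: "(norm (dseq i - F \<omega>))^2 < e / (\<bar>C \<omega>\<bar> + 1)" by blast
      let ?s = "(norm (dseq i - F \<omega>))^2"
      have "C \<omega> * ?s \<le> (\<bar>C \<omega>\<bar> + 1) * ?s" by (intro mult_right_mono) auto
      also have "\<dots> < (\<bar>C \<omega>\<bar> + 1) * (e / (\<bar>C \<omega>\<bar> + 1))" using i pos by (intro mult_strict_left_mono) auto
      also have "\<dots> = e" using pos by simp
      finally have "C \<omega> * ?s < e" .
      with upper[OF \<omega>, of "dseq i"] have "J \<omega> (dseq i) < J \<omega> (F \<omega>) + e" by argo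
      then show ?thesis by blast
    qed
    then obtain i where i: "J \<omega> (dseq i) < J \<omega> (F \<omega>) + e" by blast
    have "J \<omega> (F \<omega>) + c * ?s \<le> J \<omega> (dseq j)" using lower[OF \<omega>, of "dseq j"] .
    also have "\<dots> \<le> J \<omega> (dseq i) + ?t" using P by blast
    finally show "c * ?s \<le> ?t + e" using i by argo
  qed
  then have "?s \<le> (1 / real (Suc k))^2" using c by simp
  then show "dist (dseq j) (F \<omega>) \<le> 1 / Suc k" by (rule sq_le_dist)
qed

context krr begin

lemma adj_inner: "inner (eval_adj emb x y) g = inner y (emb g x)"
  by (rule eval_adj_inner[of emb x, OF bl])

lemma adj_norm: "norm (eval_adj emb x y) \<le> \<kappa> * norm y"
proof -
  let ?s = "eval_adj emb x y"
  have "(norm ?s)^2 = inner y (emb ?s x)" using adj_inner[of x y ?s] by (simp add: power2_norm_eq_inner)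
  also have "\<dots> \<le> norm y * norm (emb ?s x)" by (rule norm_cauchy_schwarz)
  also have "\<dots> \<le> norm y * (\<kappa> * norm ?s)" using ebound by (intro mult_left_mono) auto
  finally have "norm ?s * norm ?s \<le> norm ?s * (\<kappa> * norm y)" by (simp add: power2_eq_square algebra_simps)
  then show ?thesis using kap by (cases "norm ?s = 0") (auto simp: mult_le_cancel_left)
qed

definition psi :: "real \<Rightarrow> 'x \<times> 'y \<Rightarrow> 'h" where
  "psi lam z = eval_adj emb (fst z) (snd z - emb (flam lam) (fst z)) - lam *\<^sub>R flam lam"

lemma psi_inner: "inner (psi lam z) g = inner (snd z - emb (flam lam) (fst z)) (emb g (fst z)) - lam * inner (flam lam) g"
  unfolding psi_def by (simp add: inner_diff_left adj_inner)

lemma psi_meas[measurable]: "psi lam \<in> borel_measurable (MX \<Otimes>\<^sub>M borel)"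
proof (rule weak_meas)
  fix g
  show "(\<lambda>z. inner (psi lam z) g) \<in> borel_measurable (MX \<Otimes>\<^sub>M borel)"
    unfolding psi_inner by measurable
qed

lemma psi_norm_sq: "(norm (psi lam z))^2 \<le> 2 * \<kappa>^2 * (norm (snd z - emb (flam lam) (fst z)))^2 + 2 * lam^2 * (norm (flam lam))^2"
proof -
  let ?a = "eval_adj emb (fst z) (snd z - emb (flam lam) (fst z))"
  have "(norm (psi lam z))^2 \<le> 2 * (norm ?a)^2 + 2 * (norm (lam *\<^sub>R flam lam))^2"
    unfolding psi_def by (rule norm_diff_sq_le)
  moreover have "(norm ?a)^2 \<le> (\<kappa> * norm (snd z - emb (flam lam) (fst z)))^2"
    using adj_norm by (intro power_mono) auto
  moreover have "(norm (lam *\<^sub>R flam lam))^2 = lam^2 * (norm (flam lam))^2"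
    by (simp add: power_mult_distrib)
  ultimately show ?thesis by (simp add: power_mult_distrib)
qed

lemma Z0_meas[measurable]: "(\<lambda>\<omega>. (X \<omega>, Y \<omega>)) \<in> measurable M (MX \<Otimes>\<^sub>M borel)"
  by measurable

lemma psi_mean0:
  assumes lam: "lam > 0"
  shows "(\<integral>\<omega>. inner (psi lam (X \<omega>, Y \<omega>)) g \<partial>M) = 0"
proof -
  have "(\<integral>\<omega>. inner (psi lam (X \<omega>, Y \<omega>)) g \<partial>M)
     = (\<integral>\<omega>. inner (Y \<omega>) (emb g (X \<omega>)) - inner (emb (flam lam) (X \<omega>)) (emb g (X \<omega>)) - lam * inner (flam lam) g \<partial>M)"
    by (simp add: psi_inner inner_diff_left)
  also have "\<dots> = bform g - aform lam (flam lam) g"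
    unfolding aform_def bform_def using int_Yh[of g] int_hh[of "flam lam" g] by (simp add: prob_space)
  also have "\<dots> = 0" using flam_foc[OF lam] by simp
  finally show ?thesis .
qed

lemma EY2_nonneg: "0 \<le> (\<integral>\<omega>. (norm (Y \<omega>))^2 \<partial>M)"
  by (rule Bochner_Integration.integral_nonneg) simp

lemma psi_L2:
  assumes lam: "lam > 0"
  shows "integrable M (\<lambda>\<omega>. (norm (psi lam (X \<omega>, Y \<omega>)))^2)"
    and "(\<integral>\<omega>. (norm (psi lam (X \<omega>, Y \<omega>)))^2 \<partial>M) \<le> 2 * (\<kappa>^2 + lam) * (\<integral>\<omega>. (norm (Y \<omega>))^2 \<partial>M)"
proof -
  let ?b = "\<lambda>\<omega>. 2 * \<kappa>^2 * (norm (Y \<omega> - emb (flam lam) (X \<omega>)))^2 + 2 * lam^2 * (norm (flam lam))^2"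
  have ib: "integrable M ?b"
  proof -
    have "integrable M (\<lambda>\<omega>. (norm (emb (flam lam) (X \<omega>) - Y \<omega>))^2)"
      using hY_L2M unfolding L2M_def by auto
    then show ?thesis by (simp add: norm_minus_commute)
  qed
  have le: "(norm (psi lam (X \<omega>, Y \<omega>)))^2 \<le> ?b \<omega>" for \<omega>
    using psi_norm_sq[of lam "(X \<omega>, Y \<omega>)"] by simp
  show i: "integrable M (\<lambda>\<omega>. (norm (psi lam (X \<omega>, Y \<omega>)))^2)"
  proof (rule Bochner_Integration.integrable_bound[OF ib])
    show "(\<lambda>\<omega>. (norm (psi lam (X \<omega>, Y \<omega>)))^2) \<in> borel_measurable M" by measurable
    show "AE \<omega> in M. norm ((norm (psi lam (X \<omega>, Y \<omega>)))^2) \<le> norm (?b \<omega>)"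
      using le by (auto intro!: AE_I2 order_trans[OF _ abs_ge_self])
  qed
  have "(\<integral>\<omega>. (norm (psi lam (X \<omega>, Y \<omega>)))^2 \<partial>M) \<le> (\<integral>\<omega>. ?b \<omega> \<partial>M)"
    by (rule Bochner_Integration.integral_mono[OF i ib le])
  also have "\<dots> = 2 * \<kappa>^2 * (\<integral>\<omega>. (norm (emb (flam lam) (X \<omega>) - Y \<omega>))^2 \<partial>M) + 2 * lam^2 * (norm (flam lam))^2"
  proof -
    have "integrable M (\<lambda>\<omega>. (norm (emb (flam lam) (X \<omega>) - Y \<omega>))^2)"
      using hY_L2M unfolding L2M_def by auto
    then show ?thesis by (simp add: norm_minus_commute prob_space)
  qed
  also have "\<dots> \<le> 2 * (\<kappa>^2 + lam) * (\<integral>\<omega>. (norm (Y \<omega>))^2 \<partial>M)"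
  proof -
    have b: "(\<integral>\<omega>. (norm (emb (flam lam) (X \<omega>) - Y \<omega>))^2 \<partial>M) + lam * (norm (flam lam))^2
          \<le> (\<integral>\<omega>. (norm (Y \<omega>))^2 \<partial>M)" by (rule flam_b[OF lam])
    have nn1: "0 \<le> (\<integral>\<omega>. (norm (emb (flam lam) (X \<omega>) - Y \<omega>))^2 \<partial>M)"
      by (rule Bochner_Integration.integral_nonneg) simp
    have nn2: "0 \<le> lam * (norm (flam lam))^2" using lam by simp
    have k2: "0 \<le> \<kappa>^2" by simp
    have e1: "2 * \<kappa>^2 * (\<integral>\<omega>. (norm (emb (flam lam) (X \<omega>) - Y \<omega>))^2 \<partial>M) \<le> 2 * \<kappa>^2 * (\<integral>\<omega>. (norm (Y \<omega>))^2 \<partial>M)"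
      using b nn2 k2 by (intro mult_left_mono) auto
    have e2: "lam * (lam * (norm (flam lam))^2) \<le> lam * (\<integral>\<omega>. (norm (Y \<omega>))^2 \<partial>M)"
    proof (rule mult_left_mono)
      show "lam * (norm (flam lam))^2 \<le> (\<integral>\<omega>. (norm (Y \<omega>))^2 \<partial>M)" using b nn1 by argo
    qed (use lam in simp)
    have e2': "2 * lam^2 * (norm (flam lam))^2 \<le> 2 * (lam * (\<integral>\<omega>. (norm (Y \<omega>))^2 \<partial>M))"
    proof -
      have "2 * lam^2 * (norm (flam lam))^2 = 2 * (lam * (lam * (norm (flam lam))^2))"
        by (simp add: power2_eq_square)
      also have "\<dots> \<le> 2 * (lam * (\<integral>\<omega>. (norm (Y \<omega>))^2 \<partial>M))" using e2 by simp
      finally show ?thesis .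
    qed
    have "2 * \<kappa>^2 * (\<integral>\<omega>. (norm (emb (flam lam) (X \<omega>) - Y \<omega>))^2 \<partial>M) + 2 * lam^2 * (norm (flam lam))^2
        \<le> 2 * \<kappa>^2 * (\<integral>\<omega>. (norm (Y \<omega>))^2 \<partial>M) + 2 * (lam * (\<integral>\<omega>. (norm (Y \<omega>))^2 \<partial>M))"
      by (rule add_mono[OF e1 e2'])
    also have "\<dots> = 2 * (\<kappa>^2 + lam) * (\<integral>\<omega>. (norm (Y \<omega>))^2 \<partial>M)" by (simp add: algebra_simps)
    finally show ?thesis .
  qed
  finally show "(\<integral>\<omega>. (norm (psi lam (X \<omega>, Y \<omega>)))^2 \<partial>M) \<le> 2 * (\<kappa>^2 + lam) * (\<integral>\<omega>. (norm (Y \<omega>))^2 \<partial>M)" .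
qed

end

locale krr_sample = krr M MX X Y fstar emb \<kappa>
  for M :: "'a measure" and MX :: "'x measure" and X :: "'a \<Rightarrow> 'x"
    and Y :: "'a \<Rightarrow> 'y::{real_inner,complete_space,second_countable_topology}"
    and fstar :: "'x \<Rightarrow> 'y"
    and emb :: "'h::{real_inner,complete_space,second_countable_topology} \<Rightarrow> 'x \<Rightarrow> 'y"
    and \<kappa> :: real +
  fixes Xs :: "nat \<Rightarrow> 'a \<Rightarrow> 'x" and Ys :: "nat \<Rightarrow> 'a \<Rightarrow> 'y"
  assumes Xs_meas[measurable]: "\<And>i. Xs i \<in> measurable M MX"
    and Ys_meas[measurable]: "\<And>i. Ys i \<in> borel_measurable M"
    and iid_indep: "indep_vars (\<lambda>_. MX \<Otimes>\<^sub>M borel) (\<lambda>i \<omega>. (Xs i \<omega>, Ys i \<omega>)) UNIV"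
    and iid_distr: "\<And>i. distr M (MX \<Otimes>\<^sub>M borel) (\<lambda>\<omega>. (Xs i \<omega>, Ys i \<omega>))
                        = distr M (MX \<Otimes>\<^sub>M borel) (\<lambda>\<omega>. (X \<omega>, Y \<omega>))"
    and kap_pos: "\<kappa> > 0"
begin

abbreviation "N \<equiv> MX \<Otimes>\<^sub>M (borel :: 'y measure)"

definition Z :: "nat \<Rightarrow> 'a \<Rightarrow> 'x \<times> 'y" where "Z i \<omega> = (Xs i \<omega>, Ys i \<omega>)"

lemma Z_meas[measurable]: "Z i \<in> measurable M N"
  unfolding Z_def by measurable

definition P0 where "P0 = distr M N (\<lambda>\<omega>. (X \<omega>, Y \<omega>))"

lemma Z_distr: "distr M N (Z i) = P0"
  unfolding P0_def using iid_distr[of i] by (simp add: Z_def[abs_def])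

lemma transfer_int:
  fixes \<phi> :: "'x \<times> 'y \<Rightarrow> real"
  assumes [measurable]: "\<phi> \<in> borel_measurable N"
  shows "(\<integral>\<omega>. \<phi> (Z i \<omega>) \<partial>M) = (\<integral>\<omega>. \<phi> (X \<omega>, Y \<omega>) \<partial>M)"
    and "integrable M (\<lambda>\<omega>. \<phi> (Z i \<omega>)) \<longleftrightarrow> integrable M (\<lambda>\<omega>. \<phi> (X \<omega>, Y \<omega>))"
proof -
  have "(\<integral>\<omega>. \<phi> (Z i \<omega>) \<partial>M) = integral\<^sup>L (distr M N (Z i)) \<phi>"
    by (rule integral_distr[symmetric]) measurable
  also have "\<dots> = integral\<^sup>L P0 \<phi>" by (simp add: Z_distr)
  also have "\<dots> = (\<integral>\<omega>. \<phi> (X \<omega>, Y \<omega>) \<partial>M)" unfolding P0_def by (rule integral_distr) measurable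
  finally show "(\<integral>\<omega>. \<phi> (Z i \<omega>) \<partial>M) = (\<integral>\<omega>. \<phi> (X \<omega>, Y \<omega>) \<partial>M)" .
  have "integrable M (\<lambda>\<omega>. \<phi> (Z i \<omega>)) \<longleftrightarrow> integrable (distr M N (Z i)) \<phi>"
    by (rule integrable_distr_eq[symmetric]) measurable
  also have "\<dots> \<longleftrightarrow> integrable P0 \<phi>" by (simp add: Z_distr)
  also have "\<dots> \<longleftrightarrow> integrable M (\<lambda>\<omega>. \<phi> (X \<omega>, Y \<omega>))" unfolding P0_def by (rule integrable_distr_eq) measurable
  finally show "integrable M (\<lambda>\<omega>. \<phi> (Z i \<omega>)) \<longleftrightarrow> integrable M (\<lambda>\<omega>. \<phi> (X \<omega>, Y \<omega>))" .
qed

lemma psiZ_L2M: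
  assumes lam: "lam > 0"
  shows "L2M M (\<lambda>\<omega>. psi lam (Z i \<omega>))"
  unfolding L2M_def
proof
  show "(\<lambda>\<omega>. psi lam (Z i \<omega>)) \<in> borel_measurable M" by measurable
  show "integrable M (\<lambda>\<omega>. (norm (psi lam (Z i \<omega>)))^2)"
    using transfer_int(2)[of "\<lambda>z. (norm (psi lam z))^2" i] psi_L2(1)[OF lam] by simp
qed

lemma psiZ_sq:
  "(\<integral>\<omega>. (norm (psi lam (Z i \<omega>)))^2 \<partial>M) = (\<integral>\<omega>. (norm (psi lam (X \<omega>, Y \<omega>)))^2 \<partial>M)"
  by (rule transfer_int(1)) measurable

lemma indep_ZZ:
  assumes "i \<noteq> j"
  shows "indep_var N (Z i) N (Z j)"
proof -
  have "indep_var
    N ((\<lambda>f. f i) \<circ> (\<lambda>\<omega>. restrict (\<lambda>k. Z k \<omega>) {i}))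
    N ((\<lambda>f. f j) \<circ> (\<lambda>\<omega>. restrict (\<lambda>k. Z k \<omega>) {j}))"
  proof (intro indep_var_compose[OF indep_var_restrict[OF iid_indep[folded Z_def[abs_def]]]])
    show "{i} \<inter> {j} = {}" using assms by simp
  qed auto
  also have "((\<lambda>f. f i) \<circ> (\<lambda>\<omega>. restrict (\<lambda>k. Z k \<omega>) {i})) = Z i" by (auto simp: fun_eq_iff)
  also have "((\<lambda>f. f j) \<circ> (\<lambda>\<omega>. restrict (\<lambda>k. Z k \<omega>) {j})) = Z j" by (auto simp: fun_eq_iff)
  finally show ?thesis .
qed

lemma P0_prob: "prob_space P0"
  unfolding P0_def by (rule prob_space_distr) measurable

lemma cross0:
  assumes ij: "i \<noteq> j" and lam: "lam > 0"
  shows "(\<integral>\<omega>. inner (psi lam (Z i \<omega>)) (psi lam (Z j \<omega>)) \<partial>M) = 0"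
proof -
  interpret P0: prob_space P0 by (rule P0_prob)
  interpret PP: pair_prob_space P0 P0 by unfold_locales
  have jd: "distr M (N \<Otimes>\<^sub>M N) (\<lambda>\<omega>. (Z i \<omega>, Z j \<omega>)) = P0 \<Otimes>\<^sub>M P0"
    using indep_ZZ[OF ij] unfolding indep_var_distribution_eq by (simp add: Z_distr)
  let ?f = "\<lambda>p. inner (psi lam (fst p)) (psi lam (snd p))"
  have fm[measurable]: "?f \<in> borel_measurable (N \<Otimes>\<^sub>M N)" by measurable
  have "(\<integral>\<omega>. inner (psi lam (Z i \<omega>)) (psi lam (Z j \<omega>)) \<partial>M) = (\<integral>\<omega>. ?f (Z i \<omega>, Z j \<omega>) \<partial>M)" by simp
  also have "\<dots> = integral\<^sup>L (distr M (N \<Otimes>\<^sub>M N) (\<lambda>\<omega>. (Z i \<omega>, Z j \<omega>))) ?f"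
    by (rule integral_distr[symmetric]) measurable
  also have "\<dots> = integral\<^sup>L (P0 \<Otimes>\<^sub>M P0) ?f" by (simp add: jd)
  also have "\<dots> = (\<integral>a. (\<integral>b. ?f (a, b) \<partial>P0) \<partial>P0)"
  proof (rule PP.integral_fst'[symmetric])
    have "integrable M (\<lambda>\<omega>. ?f (Z i \<omega>, Z j \<omega>))"
      using L2M_inner_int[OF psiZ_L2M[OF lam] psiZ_L2M[OF lam]] by simp
    then have "integrable (distr M (N \<Otimes>\<^sub>M N) (\<lambda>\<omega>. (Z i \<omega>, Z j \<omega>))) ?f"
      by (subst integrable_distr_eq) measurable
    then show "integrable (P0 \<Otimes>\<^sub>M P0) ?f" by (simp add: jd)
  qed
  also have "\<dots> = (\<integral>a. 0 \<partial>P0)"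
  proof (rule Bochner_Integration.integral_cong[OF refl])
    fix a
    have "(\<integral>b. ?f (a, b) \<partial>P0) = (\<integral>\<omega>. inner (psi lam a) (psi lam (X \<omega>, Y \<omega>)) \<partial>M)"
      unfolding P0_def by (subst integral_distr) (auto)
    also have "\<dots> = (\<integral>\<omega>. inner (psi lam (X \<omega>, Y \<omega>)) (psi lam a) \<partial>M)" by (simp add: inner_commute)
    also have "\<dots> = 0" by (rule psi_mean0[OF lam])
    finally show "(\<integral>b. ?f (a, b) \<partial>P0) = 0" .
  qed
  also have "\<dots> = 0" by simp
  finally show ?thesis .
qed

definition vbar :: "real \<Rightarrow> nat \<Rightarrow> 'a \<Rightarrow> 'h" where
  "vbar lam n \<omega> = (1 / real n) *\<^sub>R (\<Sum>i<n. psi lam (Z i \<omega>))"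

lemma vbar_meas[measurable]: "vbar lam n \<in> borel_measurable M"
  unfolding vbar_def by measurable

lemma sum_sq_var:
  assumes lam: "lam > 0"
  shows "integrable M (\<lambda>\<omega>. (norm (\<Sum>i<n. psi lam (Z i \<omega>)))^2)"
    and "(\<integral>\<omega>. (norm (\<Sum>i<n. psi lam (Z i \<omega>)))^2 \<partial>M) = real n * (\<integral>\<omega>. (norm (psi lam (X \<omega>, Y \<omega>)))^2 \<partial>M)"
proof -
  have eq: "(norm (\<Sum>i<n. psi lam (Z i \<omega>)))^2 = (\<Sum>i<n. \<Sum>j<n. inner (psi lam (Z j \<omega>)) (psi lam (Z i \<omega>)))" for \<omega>
    by (simp add: power2_norm_eq_inner inner_sum_left inner_sum_right)
  have ii: "integrable M (\<lambda>\<omega>. inner (psi lam (Z i \<omega>)) (psi lam (Z j \<omega>)))" for i j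
    by (rule L2M_inner_int[OF psiZ_L2M[OF lam] psiZ_L2M[OF lam]])
  show "integrable M (\<lambda>\<omega>. (norm (\<Sum>i<n. psi lam (Z i \<omega>)))^2)"
    unfolding eq using ii by auto
  have "(\<integral>\<omega>. (norm (\<Sum>i<n. psi lam (Z i \<omega>)))^2 \<partial>M)
      = (\<Sum>i<n. \<Sum>j<n. (\<integral>\<omega>. inner (psi lam (Z j \<omega>)) (psi lam (Z i \<omega>)) \<partial>M))"
    unfolding eq using ii by (simp add: Bochner_Integration.integral_sum)
  also have "\<dots> = (\<Sum>i<n. \<Sum>j<n. if j = i then (\<integral>\<omega>. (norm (psi lam (X \<omega>, Y \<omega>)))^2 \<partial>M) else 0)"
  proof (intro sum.cong refl)
    fix i j
    show "(\<integral>\<omega>. inner (psi lam (Z j \<omega>)) (psi lam (Z i \<omega>)) \<partial>M)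
        = (if j = i then (\<integral>\<omega>. (norm (psi lam (X \<omega>, Y \<omega>)))^2 \<partial>M) else 0)"
    proof (cases "j = i")
      case True
      then show ?thesis using psiZ_sq[of lam i] by (simp add: power2_norm_eq_inner)
    next
      case False
      then show ?thesis using cross0[of j i lam] lam by simp
    qed
  qed
  also have "\<dots> = real n * (\<integral>\<omega>. (norm (psi lam (X \<omega>, Y \<omega>)))^2 \<partial>M)"
    by simp
  finally show "(\<integral>\<omega>. (norm (\<Sum>i<n. psi lam (Z i \<omega>)))^2 \<partial>M) = real n * (\<integral>\<omega>. (norm (psi lam (X \<omega>, Y \<omega>)))^2 \<partial>M)" .
qed

lemma vbar_var:
  assumes lam: "lam > 0" and n: "n \<ge> 1"
  shows "integrable M (\<lambda>\<omega>. (norm (vbar lam n \<omega>))^2)"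
    and "(\<integral>\<omega>. (norm (vbar lam n \<omega>))^2 \<partial>M) \<le> 2 * (\<kappa>^2 + lam) * (\<integral>\<omega>. (norm (Y \<omega>))^2 \<partial>M) / real n"
proof -
  have eq: "(norm (vbar lam n \<omega>))^2 = (1 / real n)^2 * (norm (\<Sum>i<n. psi lam (Z i \<omega>)))^2" for \<omega>
    unfolding vbar_def by (simp add: power_divide)
  show "integrable M (\<lambda>\<omega>. (norm (vbar lam n \<omega>))^2)"
    unfolding eq using sum_sq_var(1)[OF lam] by simp
  have "(\<integral>\<omega>. (norm (vbar lam n \<omega>))^2 \<partial>M) = (1 / real n)^2 * (real n * (\<integral>\<omega>. (norm (psi lam (X \<omega>, Y \<omega>)))^2 \<partial>M))"
    unfolding eq using sum_sq_var[OF lam] by simp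
  also have "\<dots> = (\<integral>\<omega>. (norm (psi lam (X \<omega>, Y \<omega>)))^2 \<partial>M) / real n"
    using n by (simp add: power2_eq_square)
  also have "\<dots> \<le> 2 * (\<kappa>^2 + lam) * (\<integral>\<omega>. (norm (Y \<omega>))^2 \<partial>M) / real n"
    using psi_L2(2)[OF lam] n by (intro divide_right_mono) auto
  finally show "(\<integral>\<omega>. (norm (vbar lam n \<omega>))^2 \<partial>M) \<le> 2 * (\<kappa>^2 + lam) * (\<integral>\<omega>. (norm (Y \<omega>))^2 \<partial>M) / real n" .
qed

end

context krr begin

definition Aemp :: "(nat \<Rightarrow> 'x) \<Rightarrow> (nat \<Rightarrow> 'y) \<Rightarrow> nat \<Rightarrow> real \<Rightarrow> 'h \<Rightarrow> 'h \<Rightarrow> real" where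
  "Aemp xs ys n l F g = (1 / real n) * (\<Sum>i<n. inner (emb F (xs i) - ys i) (emb g (xs i))) + l * inner F g"

definition Qemp :: "(nat \<Rightarrow> 'x) \<Rightarrow> nat \<Rightarrow> real \<Rightarrow> 'h \<Rightarrow> real" where
  "Qemp xs n l g = (1 / real n) * (\<Sum>i<n. (norm (emb g (xs i)))^2) + l * (norm g)^2"

lemma reg_expand:
  "reg_emp_risk emb xs ys n l (F + g) = reg_emp_risk emb xs ys n l F + 2 * Aemp xs ys n l F g + Qemp xs n l g"
proof -
  have pw: "(norm (emb (F + g) (xs i) - ys i))^2 = (norm (emb F (xs i) - ys i))^2
      + 2 * inner (emb F (xs i) - ys i) (emb g (xs i)) + (norm (emb g (xs i)))^2" for i
  proof -
    have "emb (F + g) (xs i) - ys i = (emb F (xs i) - ys i) + emb g (xs i)" by (simp add: emb_add)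
    then show ?thesis using norm_add_sq by metis
  qed
  have "(\<Sum>i<n. (norm (emb (F + g) (xs i) - ys i))^2) = (\<Sum>i<n. (norm (emb F (xs i) - ys i))^2)
      + 2 * (\<Sum>i<n. inner (emb F (xs i) - ys i) (emb g (xs i))) + (\<Sum>i<n. (norm (emb g (xs i)))^2)"
    by (simp add: pw sum.distrib sum_distrib_left)
  moreover have "(norm (F + g))^2 = (norm F)^2 + 2 * inner F g + (norm g)^2" by (rule norm_add_sq)
  ultimately show ?thesis
    unfolding reg_emp_risk_def Aemp_def Qemp_def by (simp add: algebra_simps)
qed

lemma Aemp_scale: "Aemp xs ys n l F (t *\<^sub>R g) = t * Aemp xs ys n l F g"
  unfolding Aemp_def by (simp add: emb_scaleR sum_distrib_left algebra_simps)

lemma Qemp_scale: "Qemp xs n l (t *\<^sub>R g) = t^2 * Qemp xs n l g"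
  unfolding Qemp_def by (simp add: emb_scaleR sum_distrib_left power_mult_distrib algebra_simps)

lemma reg_foc:
  assumes min: "\<And>g. reg_emp_risk emb xs ys n l F \<le> reg_emp_risk emb xs ys n l g"
  shows "Aemp xs ys n l F g = 0"
proof -
  have "0 \<le> t * (2 * Aemp xs ys n l F g) + t^2 * Qemp xs n l g" for t
  proof -
    have "reg_emp_risk emb xs ys n l F \<le> reg_emp_risk emb xs ys n l (F + t *\<^sub>R g)" by (rule min)
    also have "\<dots> = reg_emp_risk emb xs ys n l F + t * (2 * Aemp xs ys n l F g) + t^2 * Qemp xs n l g"
      by (simp add: reg_expand Aemp_scale Qemp_scale)
    finally show ?thesis by simp
  qed
  from quad_zero[OF this] show ?thesis by simp
qed

lemma reg_quad:
  assumes min: "\<And>g. reg_emp_risk emb xs ys n l F \<le> reg_emp_risk emb xs ys n l g"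
  shows "reg_emp_risk emb xs ys n l h = reg_emp_risk emb xs ys n l F + Qemp xs n l (h - F)"
  using reg_expand[of xs ys n l F "h - F"] reg_foc[OF min, of "h - F"] by simp

lemma Qemp_lower: "l \<ge> 0 \<Longrightarrow> l * (norm g)^2 \<le> Qemp xs n l g"
  unfolding Qemp_def by (simp add: sum_nonneg)

lemma Qemp_upper:
  assumes "n \<ge> 1"
  shows "Qemp xs n l g \<le> (\<kappa>^2 + l) * (norm g)^2"
proof -
  have "(\<Sum>i<n. (norm (emb g (xs i)))^2) \<le> (\<Sum>i<n. \<kappa>^2 * (norm g)^2)"
  proof (rule sum_mono)
    fix i
    have "(norm (emb g (xs i)))^2 \<le> (\<kappa> * norm g)^2" using ebound by (intro power_mono) auto
    then show "(norm (emb g (xs i)))^2 \<le> \<kappa>^2 * (norm g)^2" by (simp add: power_mult_distrib)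
  qed
  then have "(1 / real n) * (\<Sum>i<n. (norm (emb g (xs i)))^2) \<le> (1 / real n) * (real n * (\<kappa>^2 * (norm g)^2))"
    by (intro mult_left_mono) auto
  also have "\<dots> = \<kappa>^2 * (norm g)^2" using assms by simp
  finally show ?thesis unfolding Qemp_def by (simp add: algebra_simps)
qed

end


context krr begin

lemma L2dist_bound:
  "(\<integral>\<omega>. (norm (emb h (X \<omega>) - fstar (X \<omega>)))^2 \<partial>M)
     \<le> 2 * \<kappa>^2 * (norm (h - f))^2 + 2 * (\<integral>\<omega>. (norm (emb f (X \<omega>) - fstar (X \<omega>)))^2 \<partial>M)"
proof -
  have i1: "integrable M (\<lambda>\<omega>. (norm (emb h (X \<omega>) - fstar (X \<omega>)))^2)"
    using L2M_diff[OF hX_L2M fX_L2M] unfolding L2M_def by auto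
  have i2: "integrable M (\<lambda>\<omega>. (norm (emb f (X \<omega>) - fstar (X \<omega>)))^2)"
    using L2M_diff[OF hX_L2M fX_L2M] unfolding L2M_def by auto
  have pw: "(norm (emb h (X \<omega>) - fstar (X \<omega>)))^2 \<le> 2 * \<kappa>^2 * (norm (h - f))^2 + 2 * (norm (emb f (X \<omega>) - fstar (X \<omega>)))^2" for \<omega>
  proof -
    have "emb h (X \<omega>) - fstar (X \<omega>) = emb (h - f) (X \<omega>) + (emb f (X \<omega>) - fstar (X \<omega>))" by (simp add: emb_diff)
    then have "(norm (emb h (X \<omega>) - fstar (X \<omega>)))^2 \<le> 2 * (norm (emb (h - f) (X \<omega>)))^2 + 2 * (norm (emb f (X \<omega>) - fstar (X \<omega>)))^2"
      using norm_add_sq_le by metis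
    moreover have "(norm (emb (h - f) (X \<omega>)))^2 \<le> \<kappa>^2 * (norm (h - f))^2"
    proof -
      have "(norm (emb (h - f) (X \<omega>)))^2 \<le> (\<kappa> * norm (h - f))^2" using ebound by (intro power_mono) auto
      then show ?thesis by (simp add: power_mult_distrib)
    qed
    ultimately show ?thesis by argo
  qed
  have "(\<integral>\<omega>. (norm (emb h (X \<omega>) - fstar (X \<omega>)))^2 \<partial>M)
      \<le> (\<integral>\<omega>. 2 * \<kappa>^2 * (norm (h - f))^2 + 2 * (norm (emb f (X \<omega>) - fstar (X \<omega>)))^2 \<partial>M)"
    by (rule Bochner_Integration.integral_mono[OF i1 _ pw]) (use i2 in simp)
  also have "\<dots> = 2 * \<kappa>^2 * (norm (h - f))^2 + 2 * (\<integral>\<omega>. (norm (emb f (X \<omega>) - fstar (X \<omega>)))^2 \<partial>M)"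
    using i2 by (simp add: prob_space)
  finally show ?thesis .
qed

lemma delta_bound:
  assumes l: "l > 0" and E: "Qemp xs n l d = inner v d"
  shows "(norm d)^2 \<le> (norm v)^2 / l^2"
proof -
  have "l * (norm d)^2 \<le> inner v d" using Qemp_lower[of l d xs n] l E by simp
  also have "\<dots> \<le> norm v * norm d" by (rule norm_cauchy_schwarz)
  finally have 1: "norm d * (l * norm d) \<le> norm d * norm v" by (simp add: power2_eq_square algebra_simps)
  have "l * norm d \<le> norm v"
  proof (cases "norm d = 0")
    case True then show ?thesis by simp
  next
    case False then have "norm d > 0" by simp
    with 1 show ?thesis by (simp add: mult_le_cancel_left)
  qed
  then have "(l * norm d)^2 \<le> (norm v)^2" using l by (intro power_mono) auto
  then have "l^2 * (norm d)^2 \<le> (norm v)^2" by (simp add: power_mult_distrib)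
  then show ?thesis using l by (simp add: field_simps)
qed

end

context krr_sample begin

lemma vbar_inner:
  assumes n: "n \<ge> 1"
  shows "inner (vbar l n \<omega>) g = (1 / real n) * (\<Sum>i<n. inner (Ys i \<omega> - emb (flam l) (Xs i \<omega>)) (emb g (Xs i \<omega>)))
            - l * inner (flam l) g"
proof -
  have "inner (vbar l n \<omega>) g = (1 / real n) * (\<Sum>i<n. inner (psi l (Z i \<omega>)) g)"
    unfolding vbar_def by (simp add: inner_sum_left)
  also have "\<dots> = (1 / real n) * (\<Sum>i<n. inner (Ys i \<omega> - emb (flam l) (Xs i \<omega>)) (emb g (Xs i \<omega>)) - l * inner (flam l) g)"
    by (simp add: psi_inner Z_def)
  also have "\<dots> = (1 / real n) * (\<Sum>i<n. inner (Ys i \<omega> - emb (flam l) (Xs i \<omega>)) (emb g (Xs i \<omega>))) - l * inner (flam l) g"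
    using n by (simp add: sum_subtractf right_diff_distrib)
  finally show ?thesis .
qed

lemma energy:
  assumes n: "n \<ge> 1"
    and min: "\<And>g. reg_emp_risk emb (\<lambda>i. Xs i \<omega>) (\<lambda>i. Ys i \<omega>) n l F \<le> reg_emp_risk emb (\<lambda>i. Xs i \<omega>) (\<lambda>i. Ys i \<omega>) n l g"
  shows "Qemp (\<lambda>i. Xs i \<omega>) n l (F - flam l) = inner (vbar l n \<omega>) (F - flam l)"
proof -
  define f where "f = flam l"
  define d where "d = F - f"
  have Fd: "F = f + d" unfolding d_def by simp
  define c where "c = 1 / real n"
  define S1 where "S1 = (\<Sum>i<n. inner (emb f (Xs i \<omega>) - Ys i \<omega>) (emb d (Xs i \<omega>)))"
  define S2 where "S2 = (\<Sum>i<n. (norm (emb d (Xs i \<omega>)))^2)"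
  have foc: "Aemp (\<lambda>i. Xs i \<omega>) (\<lambda>i. Ys i \<omega>) n l F d = 0" by (rule reg_foc[OF min])
  have e1: "inner (emb F (Xs i \<omega>) - Ys i \<omega>) (emb d (Xs i \<omega>))
      = inner (emb f (Xs i \<omega>) - Ys i \<omega>) (emb d (Xs i \<omega>)) + (norm (emb d (Xs i \<omega>)))^2" for i
    unfolding Fd by (simp add: emb_add inner_add_left power2_norm_eq_inner algebra_simps)
  have sF: "(\<Sum>i<n. inner (emb F (Xs i \<omega>) - Ys i \<omega>) (emb d (Xs i \<omega>))) = S1 + S2"
    unfolding S1_def S2_def by (simp add: e1 sum.distrib)
  have e3: "inner F d = inner f d + (norm d)^2"
    unfolding Fd by (simp add: inner_add_left power2_norm_eq_inner)
  have A0: "c * (S1 + S2) + l * (inner f d + (norm d)^2) = 0"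
    using foc unfolding Aemp_def c_def[symmetric] sF e3 .
  have Q: "Qemp (\<lambda>i. Xs i \<omega>) n l d = c * S2 + l * (norm d)^2"
    unfolding Qemp_def S2_def c_def by simp
  have e2: "(\<Sum>i<n. inner (Ys i \<omega> - emb f (Xs i \<omega>)) (emb d (Xs i \<omega>))) = - S1"
  proof -
    have "inner (Ys i \<omega> - emb f (Xs i \<omega>)) (emb d (Xs i \<omega>)) = - inner (emb f (Xs i \<omega>) - Ys i \<omega>) (emb d (Xs i \<omega>))" for i
      by (simp add: inner_diff_left)
    then show ?thesis unfolding S1_def by (simp add: sum_negf)
  qed
  have V: "inner (vbar l n \<omega>) d = c * (- S1) - l * inner f d"
    using vbar_inner[OF n, of l \<omega> d] unfolding f_def[symmetric] c_def[symmetric] e2 .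
  have "c * (S1 + S2) = c * S1 + c * S2" by (simp add: algebra_simps)
  moreover have "c * (- S1) = - (c * S1)" by simp
  moreover have "l * (inner f d + (norm d)^2) = l * inner f d + l * (norm d)^2" by (simp add: algebra_simps)
  ultimately have "c * S2 + l * (norm d)^2 = c * (- S1) - l * inner f d" using A0 by argo
  then show ?thesis unfolding d_def[symmetric] f_def[symmetric] Q V by simp
qed

end

lemma sq_diff_inner: "(norm u)^2 - (norm w)^2 = inner (u - w) (u + (w::'z::real_inner))"
  by (simp add: power2_norm_eq_inner inner_diff_left inner_add_right inner_commute[of w u])

context krr begin

definition Gl :: "'h \<Rightarrow> real" where
  "Gl h = (\<integral>\<omega>. (norm (emb h (X \<omega>) - fstar (X \<omega>)))^2 \<partial>M)"

lemma Gl_nonneg: "Gl h \<ge> 0"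
  unfolding Gl_def by (rule Bochner_Integration.integral_nonneg) simp

lemma Gl_lip:
  "\<bar>Gl a - Gl b\<bar> \<le> \<kappa> * norm (a - b) * (\<kappa> * norm a + \<kappa> * norm b + 2 * (\<integral>\<omega>. norm (fstar (X \<omega>)) \<partial>M))"
proof -
  let ?u = "\<lambda>\<omega>. emb a (X \<omega>) - fstar (X \<omega>)"
  let ?w = "\<lambda>\<omega>. emb b (X \<omega>) - fstar (X \<omega>)"
  let ?B = "\<lambda>\<omega>. \<kappa> * norm (a - b) * (\<kappa> * norm a + \<kappa> * norm b + 2 * norm (fstar (X \<omega>)))"
  have iu: "integrable M (\<lambda>\<omega>. (norm (?u \<omega>))^2)" using L2M_diff[OF hX_L2M fX_L2M] unfolding L2M_def by auto
  have iw: "integrable M (\<lambda>\<omega>. (norm (?w \<omega>))^2)" using L2M_diff[OF hX_L2M fX_L2M] unfolding L2M_def by auto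
  have inf: "integrable M (\<lambda>\<omega>. norm (fstar (X \<omega>)))" by (rule integrable_norm_rn[OF fX_int])
  have pw: "\<bar>(norm (?u \<omega>))^2 - (norm (?w \<omega>))^2\<bar> \<le> ?B \<omega>" for \<omega>
  proof -
    have "(norm (?u \<omega>))^2 - (norm (?w \<omega>))^2 = inner (?u \<omega> - ?w \<omega>) (?u \<omega> + ?w \<omega>)"
      by (rule sq_diff_inner)
    also have "?u \<omega> - ?w \<omega> = emb (a - b) (X \<omega>)" by (simp add: emb_diff)
    finally have "\<bar>(norm (?u \<omega>))^2 - (norm (?w \<omega>))^2\<bar> \<le> norm (emb (a - b) (X \<omega>)) * norm (?u \<omega> + ?w \<omega>)"
      using Cauchy_Schwarz_ineq2 by metis
    also have "\<dots> \<le> (\<kappa> * norm (a - b)) * (\<kappa> * norm a + \<kappa> * norm b + 2 * norm (fstar (X \<omega>)))"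
    proof (rule mult_mono)
      show "norm (emb (a - b) (X \<omega>)) \<le> \<kappa> * norm (a - b)" by (rule ebound)
      have "norm (?u \<omega> + ?w \<omega>) \<le> norm (emb a (X \<omega>)) + norm (emb b (X \<omega>)) + 2 * norm (fstar (X \<omega>))"
        by (smt (verit, ccfv_SIG) norm_triangle_ineq4 norm_triangle_ineq)
      also have "\<dots> \<le> \<kappa> * norm a + \<kappa> * norm b + 2 * norm (fstar (X \<omega>))"
        using ebound[of a "X \<omega>"] ebound[of b "X \<omega>"] by argo
      finally show "norm (?u \<omega> + ?w \<omega>) \<le> \<kappa> * norm a + \<kappa> * norm b + 2 * norm (fstar (X \<omega>))" .
    qed (use kap in auto)
    finally show ?thesis by simp
  qed
  have "\<bar>Gl a - Gl b\<bar> = \<bar>\<integral>\<omega>. (norm (?u \<omega>))^2 - (norm (?w \<omega>))^2 \<partial>M\<bar>"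
    unfolding Gl_def using iu iw by simp
  also have "\<dots> \<le> (\<integral>\<omega>. \<bar>(norm (?u \<omega>))^2 - (norm (?w \<omega>))^2\<bar> \<partial>M)" by (rule Bochner_Integration.integral_abs_bound)
  also have "\<dots> \<le> (\<integral>\<omega>. ?B \<omega> \<partial>M)"
    by (rule Bochner_Integration.integral_mono) (use iu iw inf pw in auto)
  also have "\<dots> = \<kappa> * norm (a - b) * (\<kappa> * norm a + \<kappa> * norm b + 2 * (\<integral>\<omega>. norm (fstar (X \<omega>)) \<partial>M))"
    using inf by (simp add: prob_space algebra_simps)
  finally show ?thesis .
qed

lemma Gl_cont: "continuous_on UNIV Gl"
proof (rule continuous_at_imp_continuous_on, intro ballI)
  fix b :: 'h
  define m where "m = (\<integral>\<omega>. norm (fstar (X \<omega>)) \<partial>M)"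
  have K: "((\<lambda>a. \<kappa> * norm (a - b) * (\<kappa> * norm a + \<kappa> * norm b + 2 * m)) \<longlongrightarrow> 0) (at b)"
  proof -
    have "((\<lambda>a. \<kappa> * norm (a - b) * (\<kappa> * norm a + \<kappa> * norm b + 2 * m)) \<longlongrightarrow>
        \<kappa> * norm (b - b) * (\<kappa> * norm b + \<kappa> * norm b + 2 * m)) (at b)"
      by (intro tendsto_intros)
    then show ?thesis by simp
  qed
  have "((\<lambda>a. Gl a - Gl b) \<longlongrightarrow> 0) (at b)"
  proof (rule Lim_null_comparison[OF _ K])
    show "\<forall>\<^sub>F a in at b. norm (Gl a - Gl b) \<le> \<kappa> * norm (a - b) * (\<kappa> * norm a + \<kappa> * norm b + 2 * m)"
      using Gl_lip unfolding m_def by (intro always_eventually allI) simp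
  qed
  then have "(Gl \<longlongrightarrow> Gl b) (at b)" by (rule LIM_zero_cancel)
  then show "isCont Gl b" by (simp add: isCont_def)
qed

lemma Gl_meas[measurable]: "Gl \<in> borel_measurable borel"
  by (rule borel_measurable_continuous_onI[OF Gl_cont])

lemma Gl_eq_L2: "L2_sq_norm (distr M MX X) (\<lambda>x. emb h x - fstar x) = Gl h"
  unfolding L2_sq_norm_def Gl_def by (rule integral_distr) measurable

end

locale krr_est = krr_sample M MX X Y fstar emb \<kappa> Xs Ys
  for M :: "'a measure" and MX :: "'x measure" and X :: "'a \<Rightarrow> 'x"
    and Y :: "'a \<Rightarrow> 'y::{real_inner,complete_space,second_countable_topology}"
    and fstar :: "'x \<Rightarrow> 'y"
    and emb :: "'h::{real_inner,complete_space,second_countable_topology} \<Rightarrow> 'x \<Rightarrow> 'y"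
    and \<kappa> :: real and Xs :: "nat \<Rightarrow> 'a \<Rightarrow> 'x" and Ys :: "nat \<Rightarrow> 'a \<Rightarrow> 'y" +
  fixes lam :: "nat \<Rightarrow> real" and fhat :: "nat \<Rightarrow> 'a \<Rightarrow> 'h"
  assumes lam_pos: "\<And>n. lam n > 0"
    and lam_lim: "lam \<longlonglongrightarrow> 0"
    and lam_rate: "filterlim (\<lambda>n. sqrt (real n) * lam n) at_top sequentially"
    and fhat_min: "\<And>n \<omega> g. n \<ge> 1 \<Longrightarrow> \<omega> \<in> space M \<Longrightarrow>
         reg_emp_risk emb (\<lambda>i. Xs i \<omega>) (\<lambda>i. Ys i \<omega>) n (lam n) (fhat n \<omega>)
           \<le> reg_emp_risk emb (\<lambda>i. Xs i \<omega>) (\<lambda>i. Ys i \<omega>) n (lam n) g"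
    and dense: "\<And>g e. in_L2 (distr M MX X) g \<Longrightarrow> e > 0 \<Longrightarrow>
                  \<exists>h. L2_sq_norm (distr M MX X) (\<lambda>x. emb h x - g x) < e"
begin

lemma fhat_meas:
  assumes n: "n \<ge> 1"
  shows "fhat n \<in> borel_measurable M"
proof (rule argmin_meas[where J="\<lambda>\<omega> h. reg_emp_risk emb (\<lambda>i. Xs i \<omega>) (\<lambda>i. Ys i \<omega>) n (lam n) h"
      and c="lam n" and C="\<lambda>_. \<kappa>^2 + lam n"])
  fix h
  show "(\<lambda>\<omega>. reg_emp_risk emb (\<lambda>i. Xs i \<omega>) (\<lambda>i. Ys i \<omega>) n (lam n) h) \<in> borel_measurable M"
    unfolding reg_emp_risk_def by measurable
next
  show "lam n > 0" by (rule lam_pos)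
next
  fix \<omega> h assume \<omega>: "\<omega> \<in> space M"
  note q = reg_quad[OF fhat_min[OF n \<omega>], of h]
  show "reg_emp_risk emb (\<lambda>i. Xs i \<omega>) (\<lambda>i. Ys i \<omega>) n (lam n) (fhat n \<omega>) + lam n * (norm (h - fhat n \<omega>))^2
      \<le> reg_emp_risk emb (\<lambda>i. Xs i \<omega>) (\<lambda>i. Ys i \<omega>) n (lam n) h"
    using q Qemp_lower[of "lam n" "h - fhat n \<omega>" "\<lambda>i. Xs i \<omega>" n] lam_pos[of n] by simp
  show "reg_emp_risk emb (\<lambda>i. Xs i \<omega>) (\<lambda>i. Ys i \<omega>) n (lam n) h
      \<le> reg_emp_risk emb (\<lambda>i. Xs i \<omega>) (\<lambda>i. Ys i \<omega>) n (lam n) (fhat n \<omega>) + (\<kappa>^2 + lam n) * (norm (h - fhat n \<omega>))^2"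
    using q Qemp_upper[OF n, of "\<lambda>i. Xs i \<omega>" "lam n" "h - fhat n \<omega>"] by simp
qed

lemma Ln_meas:
  assumes n: "n \<ge> 1"
  shows "(\<lambda>\<omega>. Gl (fhat n \<omega>)) \<in> borel_measurable M"
  using measurable_compose[OF fhat_meas[OF n] Gl_meas] .

lemma Ln_bound:
  assumes n: "n \<ge> 1" and \<omega>: "\<omega> \<in> space M"
  shows "Gl (fhat n \<omega>) \<le> 2 * \<kappa>^2 * ((norm (vbar (lam n) n \<omega>))^2 / (lam n)^2) + 2 * Gl (flam (lam n))"
proof -
  have E: "Qemp (\<lambda>i. Xs i \<omega>) n (lam n) (fhat n \<omega> - flam (lam n)) = inner (vbar (lam n) n \<omega>) (fhat n \<omega> - flam (lam n))"
    by (rule energy[OF n fhat_min[OF n \<omega>]])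
  have d: "(norm (fhat n \<omega> - flam (lam n)))^2 \<le> (norm (vbar (lam n) n \<omega>))^2 / (lam n)^2"
    by (rule delta_bound[OF lam_pos E])
  have "Gl (fhat n \<omega>) \<le> 2 * \<kappa>^2 * (norm (fhat n \<omega> - flam (lam n)))^2 + 2 * Gl (flam (lam n))"
    unfolding Gl_def by (rule L2dist_bound)
  also have "\<dots> \<le> 2 * \<kappa>^2 * ((norm (vbar (lam n) n \<omega>))^2 / (lam n)^2) + 2 * Gl (flam (lam n))"
    using d by (intro add_right_mono mult_left_mono) auto
  finally show ?thesis .
qed

lemma fstar_in_L2: "in_L2 (distr M MX X) fstar"
  unfolding in_L2_def
proof
  show "fstar \<in> borel_measurable (distr M MX X)" by simp
  show "integrable (distr M MX X) (\<lambda>x. (norm (fstar x))^2)"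
    using fX_L2M unfolding L2M_def by (subst integrable_distr_eq) auto
qed

lemma A_lim: "(\<lambda>n. Gl (flam (lam n))) \<longlonglongrightarrow> 0"
proof (rule order_tendstoI)
  fix a :: real assume "a < 0"
  then show "\<forall>\<^sub>F n in sequentially. a < Gl (flam (lam n))" using Gl_nonneg
    by (intro always_eventually allI) (meson less_le_trans)
next
  fix a :: real assume a: "0 < a"
  then have "a / 2 > 0" by simp
  from dense[OF fstar_in_L2 this] obtain h where h: "L2_sq_norm (distr M MX X) (\<lambda>x. emb h x - fstar x) < a / 2"
    by blast
  then have hG: "Gl h < a / 2" by (simp add: Gl_eq_L2)
  have "(\<lambda>n. lam n * (norm h)^2) \<longlonglongrightarrow> 0 * (norm h)^2" by (intro tendsto_intros lam_lim)
  then have lim0: "(\<lambda>n. lam n * (norm h)^2) \<longlonglongrightarrow> 0" by simp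
  have "\<forall>\<^sub>F n in sequentially. lam n * (norm h)^2 < a / 2"
    using order_tendstoD(2)[OF lim0 \<open>a / 2 > 0\<close>] .
  then show "\<forall>\<^sub>F n in sequentially. Gl (flam (lam n)) < a"
  proof eventually_elim
    case (elim n)
    have "Gl (flam (lam n)) \<le> Gl h + lam n * (norm h)^2"
      unfolding Gl_def by (rule flam_approx[OF lam_pos])
    with elim hG show ?case by argo
  qed
qed

lemma rate_inv: "(\<lambda>n. 1 / (real n * (lam n)^2)) \<longlonglongrightarrow> 0"
proof -
  have "filterlim (\<lambda>n. (sqrt (real n) * lam n) * (sqrt (real n) * lam n)) at_top sequentially"
    by (rule filterlim_at_top_mult_at_top[OF lam_rate lam_rate])
  moreover have "(sqrt (real n) * lam n) * (sqrt (real n) * lam n) = real n * (lam n)^2" for n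
    by (simp add: power2_eq_square algebra_simps)
  ultimately have "filterlim (\<lambda>n. real n * (lam n)^2) at_top sequentially" by simp
  then have "((\<lambda>n. inverse (real n * (lam n)^2)) \<longlongrightarrow> 0) sequentially" by (rule tendsto_inverse_0_at_top)
  then show ?thesis by (simp add: inverse_eq_divide)
qed

lemma conv:
  assumes e: "e > 0"
  shows "(\<lambda>n. measure M {\<omega> \<in> space M. \<bar>Gl (fhat n \<omega>)\<bar> > e}) \<longlonglongrightarrow> 0"
proof -
  define EY2 where "EY2 = (\<integral>\<omega>. (norm (Y \<omega>))^2 \<partial>M)"
  define bnd where "bnd n = 4 * \<kappa>^2 * (2 * (\<kappa>^2 + lam n) * EY2) / e * (1 / (real n * (lam n)^2))" for n
  have bnd_lim: "bnd \<longlonglongrightarrow> 4 * \<kappa>^2 * (2 * (\<kappa>^2 + 0) * EY2) / e * 0"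
    unfolding bnd_def by (intro tendsto_intros lam_lim rate_inv) (use e in auto)
  have ev: "\<forall>\<^sub>F n in sequentially. 2 * Gl (flam (lam n)) \<le> e / 2"
  proof -
    have e4: "e / 4 > 0" using e by simp
    have "\<forall>\<^sub>F n in sequentially. Gl (flam (lam n)) < e / 4"
      using order_tendstoD(2)[OF A_lim e4] .
    then show ?thesis by eventually_elim argo
  qed
  have main: "\<forall>\<^sub>F n in sequentially. measure M {\<omega> \<in> space M. \<bar>Gl (fhat n \<omega>)\<bar> > e} \<le> bnd n"
    using ev eventually_ge_at_top[of 1]
  proof eventually_elim
    case (elim n)
    then have n: "n \<ge> 1" and A: "2 * Gl (flam (lam n)) \<le> e / 2" by auto
    have l: "lam n > 0" by (rule lam_pos)
    define c where "c = e * (lam n)^2 / (4 * \<kappa>^2)"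
    have c: "c > 0" unfolding c_def using e l kap_pos by simp
    have sub: "{\<omega> \<in> space M. \<bar>Gl (fhat n \<omega>)\<bar> > e} \<subseteq> {\<omega> \<in> space M. (norm (vbar (lam n) n \<omega>))^2 \<ge> c}"
    proof safe
      fix \<omega> assume \<omega>: "\<omega> \<in> space M" and g: "\<bar>Gl (fhat n \<omega>)\<bar> > e"
      have "Gl (fhat n \<omega>) > e" using g Gl_nonneg by simp
      with Ln_bound[OF n \<omega>] A have "2 * \<kappa>^2 * ((norm (vbar (lam n) n \<omega>))^2 / (lam n)^2) > e / 2" by argo
      then have "(norm (vbar (lam n) n \<omega>))^2 / (lam n)^2 > e / (4 * \<kappa>^2)"
        using kap_pos by (simp add: field_simps)
      then show "(norm (vbar (lam n) n \<omega>))^2 \<ge> c"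
        unfolding c_def using l kap_pos by (simp add: field_simps)
    qed
    have "measure M {\<omega> \<in> space M. \<bar>Gl (fhat n \<omega>)\<bar> > e} \<le> measure M {\<omega> \<in> space M. (norm (vbar (lam n) n \<omega>))^2 \<ge> c}"
      by (rule finite_measure_mono[OF sub]) measurable
    also have "\<dots> \<le> (\<integral>\<omega>. (norm (vbar (lam n) n \<omega>))^2 \<partial>M) / c"
      by (rule integral_Markov_inequality_measure[OF vbar_var(1)[OF l n] sets.top _ c]) simp
    also have "\<dots> \<le> (2 * (\<kappa>^2 + lam n) * EY2 / real n) / c"
      using vbar_var(2)[OF l n] c unfolding EY2_def by (intro divide_right_mono) auto
    also have "\<dots> = bnd n"
      unfolding bnd_def c_def using n l kap_pos e by (simp add: field_simps)
    finally show ?case .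
  qed
  show ?thesis
  proof (rule tendsto_sandwich[OF _ main tendsto_const])
    show "\<forall>\<^sub>F n in sequentially. 0 \<le> measure M {\<omega> \<in> space M. \<bar>Gl (fhat n \<omega>)\<bar> > e}" by simp
    show "bnd \<longlonglongrightarrow> 0" using bnd_lim by simp
  qed
qed

end

theorem theorem3p3:
  fixes M :: "'a measure" and MX :: "'x measure"
    and X :: "'a \<Rightarrow> 'x" and Y :: "'a \<Rightarrow> 'y::{real_inner,complete_space,second_countable_topology}"
    and fstar :: "'x \<Rightarrow> 'y"
    and emb :: "'h::{real_inner,complete_space,second_countable_topology} \<Rightarrow> 'x \<Rightarrow> 'y"
    and B :: real
    and Xs :: "nat \<Rightarrow> 'a \<Rightarrow> 'x" and Ys :: "nat \<Rightarrow> 'a \<Rightarrow> 'y"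
    and lam :: "nat \<Rightarrow> real"
    and fhat :: "nat \<Rightarrow> 'a \<Rightarrow> 'h"
  assumes P: "prob_space M"
    and sepX: "separable_measurable_space MX"
    and X_meas: "X \<in> measurable M MX"
    and Y_meas: "Y \<in> borel_measurable M"
    and Y_L2: "integrable M (\<lambda>\<omega>. (norm (Y \<omega>))\<^sup>2)"
    and cond_exp: "is_cond_exp_given M MX X Y fstar"
    and H: "vv_rkhs emb"
    and H_meas: "\<And>h. emb h \<in> borel_measurable MX"
    and B_pos: "B > 0"
    and K_bdd: "bdd_above (range (\<lambda>x. onorm (rk_kernel emb x x)))"
    and K_sup: "(SUP x. onorm (rk_kernel emb x x)) < B"
    and dense: "\<And>g e. in_L2 (distr M MX X) g \<Longrightarrow> e > 0 \<Longrightarrow>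
                  \<exists>h. L2_sq_norm (distr M MX X) (\<lambda>x. emb h x - g x) < e"
    and Xs_meas: "\<And>i. Xs i \<in> measurable M MX"
    and Ys_meas: "\<And>i. Ys i \<in> borel_measurable M"
    and iid_indep: "prob_space.indep_vars M (\<lambda>_. MX \<Otimes>\<^sub>M borel) (\<lambda>i \<omega>. (Xs i \<omega>, Ys i \<omega>)) UNIV"
    and iid_distr: "\<And>i. distr M (MX \<Otimes>\<^sub>M borel) (\<lambda>\<omega>. (Xs i \<omega>, Ys i \<omega>))
                        = distr M (MX \<Otimes>\<^sub>M borel) (\<lambda>\<omega>. (X \<omega>, Y \<omega>))"
    and lam_pos: "\<And>n. lam n > 0"
    and lam_lim: "lam \<longlonglongrightarrow> 0"
    and lam_rate: "filterlim (\<lambda>n. sqrt (real n) * lam n) at_top sequentially"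
    and fhat_min: "\<And>n \<omega> g. n \<ge> 1 \<Longrightarrow> \<omega> \<in> space M \<Longrightarrow>
         reg_emp_risk emb (\<lambda>i. Xs i \<omega>) (\<lambda>i. Ys i \<omega>) n (lam n) (fhat n \<omega>)
           \<le> reg_emp_risk emb (\<lambda>i. Xs i \<omega>) (\<lambda>i. Ys i \<omega>) n (lam n) g"
  shows "(\<forall>n \<omega>. \<omega> \<in> space M \<longrightarrow>
            risk M X Y (emb (fhat n \<omega>)) - risk M X Y fstar
              = (\<integral>\<omega>'. (norm (emb (fhat n \<omega>) (X \<omega>') - fstar (X \<omega>')))\<^sup>2 \<partial>M)
          \<and> (\<integral>\<omega>'. (norm (emb (fhat n \<omega>) (X \<omega>') - fstar (X \<omega>')))\<^sup>2 \<partial>M)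
              = L2_sq_norm (distr M MX X) (\<lambda>x. emb (fhat n \<omega>) x - fstar x))
       \<and> (\<forall>n\<ge>1. (\<lambda>\<omega>. L2_sq_norm (distr M MX X) (\<lambda>x. emb (fhat n \<omega>) x - fstar x)) \<in> borel_measurable M)
       \<and> (\<forall>e>0. (\<lambda>n. measure M {\<omega> \<in> space M.
              \<bar>L2_sq_norm (distr M MX X) (\<lambda>x. emb (fhat n \<omega>) x - fstar x)\<bar> > e}) \<longlonglongrightarrow> 0)"
proof -
  interpret P: prob_space M by (rule P)
  have bl: "\<And>x. bounded_linear (\<lambda>h. emb h x)" using H unfolding vv_rkhs_def by auto
  have onB: "onorm (rk_kernel emb x x) \<le> B" for x
  proof -
    have "onorm (rk_kernel emb x x) \<le> (SUP x. onorm (rk_kernel emb x x))"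
      by (rule cSUP_upper[OF UNIV_I K_bdd])
    then show ?thesis using K_sup by simp
  qed
  define \<kappa> where "\<kappa> = sqrt B + 1"
  have kpos: "\<kappa> > 0" unfolding \<kappa>_def using real_sqrt_ge_zero[of B] B_pos by argo
  have eb: "norm (emb h x) \<le> \<kappa> * norm h" for h x
  proof -
    have "norm (emb h x) \<le> sqrt B * norm h" by (rule rk_bound[OF bl onB])
    also have "\<dots> \<le> \<kappa> * norm h" unfolding \<kappa>_def by (simp add: mult_right_mono)
    finally show ?thesis .
  qed
  have loc: "krr_est M MX X Y fstar emb \<kappa> Xs Ys lam fhat"
    unfolding krr_est_def krr_est_axioms_def krr_sample_def krr_sample_axioms_def krr_def krr_axioms_def
    using P X_meas Y_meas Y_L2 cond_exp bl H_meas eb Xs_meas Ys_meas iid_indep iid_distr kpos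
        lam_pos lam_lim lam_rate fhat_min dense by auto
  interpret E: krr_est M MX X Y fstar emb \<kappa> Xs Ys lam fhat by (rule loc)
  have L2eq: "L2_sq_norm (distr M MX X) (\<lambda>x. emb h x - fstar x) = E.Gl h" for h
    by (rule E.Gl_eq_L2)
  show ?thesis
  proof (intro conjI allI impI)
    fix n \<omega> assume "\<omega> \<in> space M"
    show "risk M X Y (emb (fhat n \<omega>)) - risk M X Y fstar
              = (\<integral>\<omega>'. (norm (emb (fhat n \<omega>) (X \<omega>') - fstar (X \<omega>')))\<^sup>2 \<partial>M)"
      unfolding risk_def using E.risk_dec[of "fhat n \<omega>"] by simp
    show "(\<integral>\<omega>'. (norm (emb (fhat n \<omega>) (X \<omega>') - fstar (X \<omega>')))\<^sup>2 \<partial>M)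
              = L2_sq_norm (distr M MX X) (\<lambda>x. emb (fhat n \<omega>) x - fstar x)"
      unfolding L2eq E.Gl_def ..
  next
    fix n :: nat assume n: "n \<ge> 1"
    show "(\<lambda>\<omega>. L2_sq_norm (distr M MX X) (\<lambda>x. emb (fhat n \<omega>) x - fstar x)) \<in> borel_measurable M"
      unfolding L2eq by (rule E.Ln_meas[OF n])
  next
    fix e :: real assume e: "e > 0"
    show "(\<lambda>n. measure M {\<omega> \<in> space M.
              \<bar>L2_sq_norm (distr M MX X) (\<lambda>x. emb (fhat n \<omega>) x - fstar x)\<bar> > e}) \<longlonglongrightarrow> 0"
      unfolding L2eq by (rule E.conv[OF e])
  qed
qed

end
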